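(* Let $p\colon X\to Y$ be a right fibration of simplicial sets and let $y$ be a vertex of $Y$. Then the natural map $p^{-1}(y)\to P(p,y)$ is the inclusion of a deformation retract.
   Context: A right fibration is a map of simplicial sets with the right lifting property with respect to all horn inclusions $\Lambda^k[n]\to\Delta[n]$ with $n\ge1$ and $0<k\le n$. $P(Y,y)$ is the simplicial set with $P(Y,y)_n=\{z\colon\Delta[n+1]\to Y\mid z(0)=y\}$, simplicial operators induced by $\bar f\colon[m+1]\to[n+1]$, $\bar f(0)=0$, $\bar f(k)=f(k-1)+1$ for $f\colon[m]\to[n]$; it has base vertex $*$ given by the $1$-simplex constant at $y$. The map $\bar\jmath\colon P(Y,y)\to Y$ sends an $(n+1)$-simplex $z$ to its face opposite vertex $0$. The right homotopy fibre $P(p,y)$ is the pullback of $X\xrightarrow{p}Y\xleftarrow{\bar\jmath}P(Y,y)$. The fibre $p^{-1}(y)$ is the pullback of $X\xrightarrow{p}Y\xleftarrow{y}\Delta[0]$, and the map $p^{-1}(y)\to P(p,y)$ is induced by $*\colon\Delta[0]\to P(Y,y)$ (note $\bar\jmath\circ *=y$). *)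

theory Defs
  imports Main
begin

text \<open>A morphism [m] \<rightarrow> [n] of the simplex category is represented by a function
  nat \<Rightarrow> nat that is monotone on {..m} and maps {..m} into {..n}; only its values on
  {..m} matter.\<close>

definition simp_op :: "nat \<Rightarrow> nat \<Rightarrow> (nat \<Rightarrow> nat) \<Rightarrow> bool" where
  "simp_op m n f \<longleftrightarrow> (\<forall>i j. i \<le> j \<longrightarrow> j \<le> m \<longrightarrow> f i \<le> f j) \<and> (\<forall>i\<le>m. f i \<le> n)"

text \<open>A simplicial set: the set of n-simplices for each n, and the simplicial operator
  sop X m n f : X_n \<rightarrow> X_m induced by f : [m] \<rightarrow> [n].\<close>

record 'a sset =
  scar :: "nat \<Rightarrow> 'a set"
  sop  :: "nat \<Rightarrow> nat \<Rightarrow> (nat \<Rightarrow> nat) \<Rightarrow> 'a \<Rightarrow> 'a"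

definition is_sset :: "'a sset \<Rightarrow> bool" where
  "is_sset X \<longleftrightarrow>
     (\<forall>m n f x. simp_op m n f \<longrightarrow> x \<in> scar X n \<longrightarrow> sop X m n f x \<in> scar X m) \<and>
     (\<forall>n x. x \<in> scar X n \<longrightarrow> sop X n n id x = x) \<and>
     (\<forall>l m n g f x. simp_op l m g \<longrightarrow> simp_op m n f \<longrightarrow> x \<in> scar X n \<longrightarrow>
          sop X l m g (sop X m n f x) = sop X l n (f \<circ> g) x) \<and>
     (\<forall>m n f f' x. simp_op m n f \<longrightarrow> (\<forall>i\<le>m. f i = f' i) \<longrightarrow> x \<in> scar X n \<longrightarrow>
          sop X m n f x = sop X m n f' x)"

definition smorph :: "'a sset \<Rightarrow> 'b sset \<Rightarrow> (nat \<Rightarrow> 'a \<Rightarrow> 'b) \<Rightarrow> bool" where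
  "smorph X Y g \<longleftrightarrow>
     (\<forall>n x. x \<in> scar X n \<longrightarrow> g n x \<in> scar Y n) \<and>
     (\<forall>m n f x. simp_op m n f \<longrightarrow> x \<in> scar X n \<longrightarrow> g m (sop X m n f x) = sop Y m n f (g n x))"

text \<open>An m-simplex of \<Delta>[n] is a monotone map [m] \<rightarrow> [n], encoded as the list of its values.\<close>

definition simplex :: "nat \<Rightarrow> nat list sset" where
  "simplex n = \<lparr> scar = (\<lambda>m. {xs. length xs = Suc m \<and> sorted xs \<and> set xs \<subseteq> {..n}}),
                sop = (\<lambda>m k f xs. map (\<lambda>i. xs ! f i) [0..<Suc m]) \<rparr>"

definition horn :: "nat \<Rightarrow> nat \<Rightarrow> nat list sset" where
  "horn n k = \<lparr> scar = (\<lambda>m. {xs. xs \<in> scar (simplex n) m \<and> set xs \<union> {k} \<noteq> {..n}}),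
               sop = sop (simplex n) \<rparr>"

definition has_rlp_horn :: "nat \<Rightarrow> nat \<Rightarrow> 'a sset \<Rightarrow> 'b sset \<Rightarrow> (nat \<Rightarrow> 'a \<Rightarrow> 'b) \<Rightarrow> bool" where
  "has_rlp_horn n k X Y p \<longleftrightarrow>
     (\<forall>a b. smorph (horn n k) X a \<longrightarrow> smorph (simplex n) Y b \<longrightarrow>
        (\<forall>m s. s \<in> scar (horn n k) m \<longrightarrow> p m (a m s) = b m s) \<longrightarrow>
        (\<exists>l. smorph (simplex n) X l \<and>
             (\<forall>m s. s \<in> scar (horn n k) m \<longrightarrow> l m s = a m s) \<and>
             (\<forall>m s. s \<in> scar (simplex n) m \<longrightarrow> p m (l m s) = b m s)))"

definition right_fibration :: "'a sset \<Rightarrow> 'b sset \<Rightarrow> (nat \<Rightarrow> 'a \<Rightarrow> 'b) \<Rightarrow> bool" where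
  "right_fibration X Y p \<longleftrightarrow> smorph X Y p \<and>
     (\<forall>n k. 1 \<le> n \<longrightarrow> 0 < k \<longrightarrow> k \<le> n \<longrightarrow> has_rlp_horn n k X Y p)"

definition spullback :: "'a sset \<Rightarrow> (nat \<Rightarrow> 'a \<Rightarrow> 'c) \<Rightarrow> 'b sset \<Rightarrow> (nat \<Rightarrow> 'b \<Rightarrow> 'c) \<Rightarrow> ('a \<times> 'b) sset" where
  "spullback X p Z q = \<lparr> scar = (\<lambda>n. {(x, z). x \<in> scar X n \<and> z \<in> scar Z n \<and> p n x = q n z}),
                         sop = (\<lambda>m n f (x, z). (sop X m n f x, sop Z m n f z)) \<rparr>"

definition sprod_interval :: "'a sset \<Rightarrow> ('a \<times> nat list) sset" where
  "sprod_interval X = \<lparr> scar = (\<lambda>n. scar X n \<times> scar (simplex 1) n),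
                        sop = (\<lambda>m n f (x, t). (sop X m n f x, sop (simplex 1) m n f t)) \<rparr>"

definition vertex_map :: "'b sset \<Rightarrow> 'b \<Rightarrow> nat \<Rightarrow> nat list \<Rightarrow> 'b" where
  "vertex_map Y y = (\<lambda>n _. sop Y n 0 (\<lambda>_. 0) y)"

definition fbar :: "(nat \<Rightarrow> nat) \<Rightarrow> nat \<Rightarrow> nat" where
  "fbar f k = (if k = 0 then 0 else Suc (f (k - 1)))"

definition path_space :: "'b sset \<Rightarrow> 'b \<Rightarrow> 'b sset" where
  "path_space Y y = \<lparr> scar = (\<lambda>n. {z. z \<in> scar Y (Suc n) \<and> sop Y 0 (Suc n) (\<lambda>_. 0) z = y}),
                      sop = (\<lambda>m n f z. sop Y (Suc m) (Suc n) (fbar f) z) \<rparr>"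

text \<open>\<bar>\<jmath> : P(Y,y) \<rightarrow> Y, face opposite vertex 0.\<close>

definition jbar :: "'b sset \<Rightarrow> nat \<Rightarrow> 'b \<Rightarrow> 'b" where
  "jbar Y = (\<lambda>n z. sop Y n (Suc n) Suc z)"

text \<open>The base vertex * of P(Y,y) as a map \<Delta>[0] \<rightarrow> P(Y,y): in degree n it is the
  degenerate (n+1)-simplex of Y at y.\<close>

definition base_map :: "'b sset \<Rightarrow> 'b \<Rightarrow> nat \<Rightarrow> nat list \<Rightarrow> 'b" where
  "base_map Y y = (\<lambda>n _. sop Y (Suc n) 0 (\<lambda>_. 0) y)"

definition right_hofib :: "'a sset \<Rightarrow> 'b sset \<Rightarrow> (nat \<Rightarrow> 'a \<Rightarrow> 'b) \<Rightarrow> 'b \<Rightarrow> ('a \<times> 'b) sset" where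
  "right_hofib X Y p y = spullback X p (path_space Y y) (jbar Y)"

definition sfibre :: "'a sset \<Rightarrow> 'b sset \<Rightarrow> (nat \<Rightarrow> 'a \<Rightarrow> 'b) \<Rightarrow> 'b \<Rightarrow> ('a \<times> nat list) sset" where
  "sfibre X Y p y = spullback X p (simplex 0) (vertex_map Y y)"

definition fibre_to_hofib :: "'b sset \<Rightarrow> 'b \<Rightarrow> nat \<Rightarrow> ('a \<times> nat list) \<Rightarrow> ('a \<times> 'b)" where
  "fibre_to_hofib Y y = (\<lambda>n (x, d). (x, base_map Y y n d))"

definition deformation_retract_incl :: "'a sset \<Rightarrow> 'b sset \<Rightarrow> (nat \<Rightarrow> 'a \<Rightarrow> 'b) \<Rightarrow> bool" where
  "deformation_retract_incl A B i \<longleftrightarrow>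
     smorph A B i \<and> (\<forall>n. inj_on (i n) (scar A n)) \<and>
     (\<exists>r h. smorph B A r \<and> (\<forall>n a. a \<in> scar A n \<longrightarrow> r n (i n a) = a) \<and>
        smorph (sprod_interval B) B h \<and>
        (\<forall>n b. b \<in> scar B n \<longrightarrow> h n (b, replicate (Suc n) 0) = i n (r n b)) \<and>
        (\<forall>n b. b \<in> scar B n \<longrightarrow> h n (b, replicate (Suc n) 1) = b) \<and>
        (\<forall>n a t. a \<in> scar A n \<longrightarrow> t \<in> scar (simplex 1) n \<longrightarrow> h n (i n a, t) = i n a))"

end

theory Submission
  imports Defs
begin

declare upt_Suc[simp del]

lemma simplex_scar[simp]:
  "xs \<in> scar (simplex n) m \<longleftrightarrow> length xs = Suc m \<and> sorted xs \<and> set xs \<subseteq> {..n}"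
  by (simp add: simplex_def)

lemma simplex_sop[simp]:
  "sop (simplex n) m k f xs = map (\<lambda>i. xs ! f i) [0..<Suc m]"
  by (simp add: simplex_def)

lemma simp_opD1: "simp_op m n f \<Longrightarrow> i \<le> j \<Longrightarrow> j \<le> m \<Longrightarrow> f i \<le> f j"
  by (simp add: simp_op_def)

lemma simp_opD2: "simp_op m n f \<Longrightarrow> i \<le> m \<Longrightarrow> f i \<le> n"
  by (simp add: simp_op_def)

lemma simp_op_comp: "simp_op l m g \<Longrightarrow> simp_op m n f \<Longrightarrow> simp_op l n (f \<circ> g)"
  unfolding simp_op_def by (auto simp: le_trans)

lemma simp_op_id: "simp_op n n id"
  by (simp add: simp_op_def)

lemma simp_op_cong: "simp_op m n f \<Longrightarrow> (\<And>i. i \<le> m \<Longrightarrow> f i = g i) \<Longrightarrow> simp_op m n g"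
  unfolding simp_op_def by auto

lemma simp_op_const: "c \<le> n \<Longrightarrow> simp_op m n (\<lambda>_. c)"
  by (simp add: simp_op_def)

lemma sorted_nth_simp_op:
  assumes "xs \<in> scar (simplex n) m"
  shows "simp_op m n (nth xs)"
  using assms unfolding simp_op_def
  by (auto simp: sorted_nth_mono less_Suc_eq_le intro!: subsetD[of "set xs" "{..n}", simplified])

lemma simplex_sop_closed:
  assumes "simp_op m k f" "xs \<in> scar (simplex n) k"
  shows "sop (simplex n) m k f xs \<in> scar (simplex n) m"
proof -
  have len: "length xs = Suc k" and srt: "sorted xs" and st: "set xs \<subseteq> {..n}"
    using assms(2) by auto
  have "sorted (map (\<lambda>i. xs ! f i) [0..<Suc m])"
    unfolding sorted_iff_nth_mono
  proof (intro allI impI)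
    fix i j assume "i \<le> j" "j < length (map (\<lambda>i. xs ! f i) [0..<Suc m])"
    then have "j \<le> m" by simp
    with \<open>i \<le> j\<close> have "f i \<le> f j" "f j \<le> k" using assms(1) simp_opD1 simp_opD2 by blast+
    then show "map (\<lambda>i. xs ! f i) [0..<Suc m] ! i \<le> map (\<lambda>i. xs ! f i) [0..<Suc m] ! j"
      using \<open>i \<le> j\<close> \<open>j \<le> m\<close> srt len by (simp add: sorted_nth_mono)
  qed
  moreover have "set (map (\<lambda>i. xs ! f i) [0..<Suc m]) \<subseteq> {..n}"
  proof
    fix a assume "a \<in> set (map (\<lambda>i. xs ! f i) [0..<Suc m])"
    then obtain i where "i \<le> m" "a = xs ! f i" by (auto simp: less_Suc_eq_le)
    then have "f i < length xs" using assms(1) len simp_opD2 by fastforce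
    then show "a \<in> {..n}" using st \<open>a = xs ! f i\<close> nth_mem by blast
  qed
  ultimately show ?thesis by simp
qed

lemma simplex_sop_comp:
  assumes "simp_op l m g" "simp_op m k f"
  shows "sop (simplex n) l m g (sop (simplex n) m k f xs) = sop (simplex n) l k (f \<circ> g) xs"
proof -
  have "\<And>i. i < Suc l \<Longrightarrow> g i < Suc m" using simp_opD2[OF assms(1)] by (simp add: less_Suc_eq_le)
  then show ?thesis by simp
qed

lemma simplex_sop_cong:
  "(\<And>i. i \<le> m \<Longrightarrow> f i = f' i) \<Longrightarrow> sop (simplex n) m k f xs = sop (simplex n) m k f' xs"
  by simp

lemma simplex_sop_id:
  "xs \<in> scar (simplex n) m \<Longrightarrow> sop (simplex n) m m id xs = xs"
  by (simp add: list_eq_iff_nth_eq)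

lemma is_sset_simplex: "is_sset (simplex n)"
  unfolding is_sset_def
  apply (intro conjI allI impI)
  apply (erule (1) simplex_sop_closed)
  apply (erule simplex_sop_id)
  apply (erule (1) simplex_sop_comp)
  apply (rule simplex_sop_cong, blast)
  done


lemma sset_closed: "is_sset X \<Longrightarrow> simp_op m n f \<Longrightarrow> x \<in> scar X n \<Longrightarrow> sop X m n f x \<in> scar X m"
  by (simp add: is_sset_def)
lemma sset_id: "is_sset X \<Longrightarrow> x \<in> scar X n \<Longrightarrow> sop X n n id x = x"
  by (simp add: is_sset_def)
lemma sset_comp: "is_sset X \<Longrightarrow> simp_op l m g \<Longrightarrow> simp_op m n f \<Longrightarrow> x \<in> scar X n \<Longrightarrow>
          sop X l m g (sop X m n f x) = sop X l n (f \<circ> g) x"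
  by (simp add: is_sset_def)
lemma sset_cong: "is_sset X \<Longrightarrow> simp_op m n f \<Longrightarrow> (\<And>i. i\<le>m \<Longrightarrow> f i = f' i) \<Longrightarrow> x \<in> scar X n \<Longrightarrow>
          sop X m n f x = sop X m n f' x"
  by (simp add: is_sset_def)

lemma sset_id': "is_sset X \<Longrightarrow> simp_op n n f \<Longrightarrow> (\<And>i. i\<le>n \<Longrightarrow> f i = i) \<Longrightarrow> x \<in> scar X n \<Longrightarrow> sop X n n f x = x"
  by (metis id_apply sset_cong sset_id)

lemma smorphD1: "smorph X Y g \<Longrightarrow> x \<in> scar X n \<Longrightarrow> g n x \<in> scar Y n"
  by (simp add: smorph_def)
lemma smorphD2: "smorph X Y g \<Longrightarrow> simp_op m n f \<Longrightarrow> x \<in> scar X n \<Longrightarrow> g m (sop X m n f x) = sop Y m n f (g n x)"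
  by (simp add: smorph_def)

definition psmap :: "'a sset \<Rightarrow> (nat \<Rightarrow> 'a set) \<Rightarrow> 'b sset \<Rightarrow> (nat \<Rightarrow> 'a \<Rightarrow> 'b) \<Rightarrow> bool" where
 "psmap K S Z q \<longleftrightarrow> (\<forall>m. S m \<subseteq> scar K m) \<and>
   (\<forall>m n f s. simp_op m n f \<longrightarrow> s \<in> S n \<longrightarrow> sop K m n f s \<in> S m) \<and>
   (\<forall>m s. s \<in> S m \<longrightarrow> q m s \<in> scar Z m) \<and>
   (\<forall>m n f s. simp_op m n f \<longrightarrow> s \<in> S n \<longrightarrow> q m (sop K m n f s) = sop Z m n f (q n s))"

abbreviation prism :: "nat \<Rightarrow> (nat list \<times> nat list) sset" where
  "prism N \<equiv> sprod_interval (simplex N)"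

lemma prism_scar[simp]: "(u,t) \<in> scar (prism N) m \<longleftrightarrow> u \<in> scar (simplex N) m \<and> t \<in> scar (simplex 1) m"
  by (simp add: sprod_interval_def)

lemma prism_sop[simp]: "sop (prism N) m n f (u,t) = (map (\<lambda>i. u!f i) [0..<Suc m], map (\<lambda>i. t!f i) [0..<Suc m])"
  by (simp add: sprod_interval_def)

lemma horn_scar[simp]: "v \<in> scar (horn n k) m \<longleftrightarrow> v \<in> scar (simplex n) m \<and> set v \<union> {k} \<noteq> {..n}"
  by (simp add: horn_def)

lemma horn_sop[simp]: "sop (horn n k) = sop (simplex n)"
  by (simp add: horn_def)

definition pcond :: "nat \<Rightarrow> nat \<Rightarrow> nat list \<Rightarrow> nat list \<Rightarrow> bool" where
 "pcond m i u t \<longleftrightarrow> (\<forall>q\<le>m. (t!q = 0 \<longrightarrow> u!q \<le> i) \<and> (t!q \<noteq> 0 \<longrightarrow> i \<le> u!q))"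

definition Sj :: "nat \<Rightarrow> nat \<Rightarrow> nat \<Rightarrow> (nat list \<times> nat list) set" where
 "Sj N j m = {(u,t). (u,t) \<in> scar (prism N) m \<and> (\<not> {..N} \<subseteq> set u \<or> set t \<subseteq> {1} \<or> (\<exists>i<j. pcond m i u t))}"

definition coll :: "nat \<Rightarrow> nat \<Rightarrow> nat" where
  "coll j k = (if k \<le> j then k else k - 1)"

definition sig :: "nat \<Rightarrow> nat list \<Rightarrow> nat list \<times> nat list" where
 "sig j v = (map (coll j) v, map (\<lambda>k. if k \<le> j then 0 else 1) v)"

definition unsig :: "nat list \<times> nat list \<Rightarrow> nat list" where
 "unsig s = map (\<lambda>q. fst s ! q + snd s ! q) [0..<length (fst s)]"

lemma Sj_sub: "s \<in> Sj N j m \<Longrightarrow> s \<in> scar (prism N) m"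
  by (auto simp: Sj_def)

lemma Sj_mono: "j \<le> j' \<Longrightarrow> s \<in> Sj N j m \<Longrightarrow> s \<in> Sj N j' m"
  unfolding Sj_def by (auto dest: order.strict_trans2)

lemma set_sop_sub: "simp_op m n f \<Longrightarrow> length u = Suc n \<Longrightarrow> set (map (\<lambda>i. u!f i) [0..<Suc m]) \<subseteq> set u"
  using simp_opD2[of m n f] by (auto simp: less_Suc_eq_le intro!: nth_mem)

lemma Sj_closed:
  assumes f: "simp_op m n f" and s: "s \<in> Sj N j n"
  shows "sop (prism N) m n f s \<in> Sj N j m"
proof -
  obtain u t where st: "s = (u,t)" by force
  have pr: "(u,t) \<in> scar (prism N) n" using s st Sj_sub by blast
  then have lu: "length u = Suc n" and lt: "length t = Suc n" by auto
  let ?u = "map (\<lambda>i. u!f i) [0..<Suc m]" and ?t = "map (\<lambda>i. t!f i) [0..<Suc m]"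
  have pr': "(?u, ?t) \<in> scar (prism N) m"
    using simplex_sop_closed[OF f] pr by auto
  have su: "set ?u \<subseteq> set u" and stt: "set ?t \<subseteq> set t"
    using set_sop_sub[OF f] lu lt by auto
  have "\<not> {..N} \<subseteq> set ?u \<or> set ?t \<subseteq> {1} \<or> (\<exists>i<j. pcond m i ?u ?t)"
  proof -
    have "\<not> {..N} \<subseteq> set u \<or> set t \<subseteq> {1} \<or> (\<exists>i<j. pcond n i u t)"
      using s st by (simp add: Sj_def)
    moreover have "pcond n i u t \<Longrightarrow> pcond m i ?u ?t" for i
      unfolding pcond_def using simp_opD2[OF f] by (simp add: less_Suc_eq_le)
    ultimately show ?thesis using su stt by blast
  qed
  then show ?thesis using pr' st by (simp add: Sj_def)
qed

lemma Sj_all: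
  assumes "s \<in> scar (prism N) m"
  shows "s \<in> Sj N (Suc N) m"
proof -
  obtain u t where st: "s = (u,t)" by force
  have u: "length u = Suc m" "sorted u" "set u \<subseteq> {..N}" and t: "length t = Suc m" "sorted t" "set t \<subseteq> {..1}"
    using assms st by auto
  show ?thesis
  proof (cases "set t \<subseteq> {1}")
    case True then show ?thesis using assms st by (simp add: Sj_def)
  next
    case False
    then obtain q0 where q0: "q0 \<le> m" "t!q0 = 0"
      using t by (auto simp: in_set_conv_nth less_Suc_eq_le subset_iff)
    define Q where "Q = {q. q \<le> m \<and> t!q = 0}"
    have finQ: "finite Q" and neQ: "Q \<noteq> {}" using q0 by (auto simp: Q_def)
    define qm where "qm = Max Q"
    have qmQ: "qm \<in> Q" using finQ neQ qm_def Max_in by blast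
    have qmax: "q \<in> Q \<Longrightarrow> q \<le> qm" for q using finQ qm_def by simp
    have "pcond m (u!qm) u t"
      unfolding pcond_def
    proof (intro allI impI conjI)
      fix q assume q: "q \<le> m"
      { assume "t!q = 0" then have "q \<le> qm" using qmax q by (simp add: Q_def)
        then show "u!q \<le> u!qm" using u qmQ by (simp add: Q_def sorted_nth_mono) }
      { assume tq: "t!q \<noteq> 0"
        have "qm < q"
        proof (rule ccontr)
          assume "\<not> qm < q" then have "q \<le> qm" by simp
          then have "t!q \<le> t!qm" using sorted_nth_mono[OF t(2) \<open>q \<le> qm\<close>] t qmQ by (simp add: Q_def)
          then show False using tq qmQ by (simp add: Q_def)
        qed
        then show "u!qm \<le> u!q" using u q by (simp add: sorted_nth_mono) }
    qed
    moreover have "u!qm \<le> N"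
    proof -
      have "qm < length u" using u qmQ by (simp add: Q_def)
      then have "u!qm \<in> set u" by (rule nth_mem)
      then show ?thesis using u(3) by auto
    qed
    ultimately show ?thesis using assms st by (auto simp: Sj_def)
  qed
qed

lemma coll_mono: "a \<le> b \<Longrightarrow> coll j a \<le> coll j b"
  by (auto simp: coll_def)

lemma sig_prism:
  assumes v: "v \<in> scar (simplex (Suc N)) m" and j: "j \<le> N"
  shows "sig j v \<in> scar (prism N) m"
proof -
  have lv: "length v = Suc m" and sv: "sorted v" and setv: "set v \<subseteq> {..Suc N}" using v by auto
  have "sorted (map (coll j) v)"
    using sv by (simp add: sorted_iff_nth_mono coll_mono)
  moreover have "sorted (map (\<lambda>k. if k \<le> j then 0 else 1::nat) v)"
    using sv by (auto simp: sorted_iff_nth_mono) (meson le_trans)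
  moreover have "set (map (coll j) v) \<subseteq> {..N}"
    using setv j by (auto simp: coll_def)
  moreover have "set (map (\<lambda>k. if k \<le> j then 0 else 1::nat) v) \<subseteq> {..1}"
    by auto
  ultimately show ?thesis using lv by (simp add: sig_def)
qed

lemma sig_sop:
  assumes f: "simp_op m n f" and lv: "length v = Suc n"
  shows "sig j (sop (simplex (Suc N)) m n f v) = sop (prism N) m n f (sig j v)"
proof -
  have "\<And>i. i < Suc m \<Longrightarrow> f i < length v" using simp_opD2[OF f] lv by (simp add: less_Suc_eq_le)
  then show ?thesis by (simp add: sig_def)
qed

lemma sig_pcond:
  assumes lv: "length v = Suc m"
  shows "pcond m j (fst (sig j v)) (snd (sig j v))"
  using lv by (auto simp: pcond_def sig_def coll_def)

lemma unsig_sig: "unsig (sig j v) = v"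
  by (intro nth_equalityI) (auto simp: unsig_def sig_def coll_def)

lemma sig_unsig:
  assumes pr: "(u,t) \<in> scar (prism N) m" and pc: "pcond m j u t"
  shows "sig j (unsig (u,t)) = (u,t)" and "unsig (u,t) \<in> scar (simplex (Suc N)) m"
proof -
  have u: "length u = Suc m" "sorted u" "set u \<subseteq> {..N}" and t: "length t = Suc m" "sorted t" "set t \<subseteq> {..1}"
    using pr by auto
  have tq: "q \<le> m \<Longrightarrow> t!q = 0 \<or> t!q = 1" for q
  proof -
    assume "q \<le> m" then have "t!q \<in> set t" using t by (simp add: less_Suc_eq_le)
    then show ?thesis using t by fastforce
  qed
  have uq: "q \<le> m \<Longrightarrow> u!q \<le> N" for q
  proof -
    assume "q \<le> m" then have "u!q \<in> set u" using u by (simp add: less_Suc_eq_le)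
    then show ?thesis using u by fastforce
  qed
  show "sig j (unsig (u,t)) = (u,t)"
  proof -
    have "q \<le> m \<Longrightarrow> coll j (u!q + t!q) = u!q \<and> (if u!q + t!q \<le> j then 0 else 1) = t!q" for q
      using tq[of q] pc unfolding pcond_def coll_def by force
    then show ?thesis using u t by (auto simp: sig_def unsig_def list_eq_iff_nth_eq less_Suc_eq_le)
  qed
  show "unsig (u,t) \<in> scar (simplex (Suc N)) m"
  proof -
    have "sorted (unsig (u,t))"
      using u t by (auto simp: unsig_def sorted_iff_nth_mono intro!: add_mono)
    moreover have "set (unsig (u,t)) \<subseteq> {..Suc N}"
      using uq tq u by (fastforce simp: unsig_def less_Suc_eq_le)
    ultimately show ?thesis using u by (simp add: unsig_def)
  qed
qed

lemma L1:
  assumes v: "v \<in> scar (horn (Suc N) (Suc j)) m" and j: "j \<le> N"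
  shows "sig j v \<in> Sj N j m"
proof -
  have vs: "v \<in> scar (simplex (Suc N)) m" and hv: "set v \<union> {Suc j} \<noteq> {..Suc N}" using v by auto
  have lv: "length v = Suc m" and setv: "set v \<subseteq> {..Suc N}" using vs by auto
  obtain k where k: "k \<le> Suc N" "k \<noteq> Suc j" "k \<notin> set v"
    using hv setv j by auto
  let ?u = "map (coll j) v" and ?t = "map (\<lambda>k. if k \<le> j then 0 else 1::nat) v"
  have "\<not> {..N} \<subseteq> set ?u \<or> set ?t \<subseteq> {1} \<or> (\<exists>i<j. pcond m i ?u ?t)"
  proof (cases "k < j")
    case True
    have "k \<notin> set ?u"
    proof
      assume "k \<in> set ?u"
      then obtain w where "w \<in> set v" "coll j w = k" by auto
      then have "w = k" using True by (auto simp: coll_def split: if_splits)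
      then show False using k \<open>w \<in> set v\<close> by simp
    qed
    moreover have "k \<le> N" using True j by simp
    ultimately have "\<not> {..N} \<subseteq> set ?u" by (metis atMost_iff subsetD)
    then show ?thesis by blast
  next
    case False
    show ?thesis
    proof (cases "k = j")
      case kj: True
      show ?thesis
      proof (cases j)
        case 0
        then have "set ?t \<subseteq> {1}" using k kj by (auto simp: not_le)
        then show ?thesis by simp
      next
        case (Suc j')
        have "pcond m j' ?u ?t"
          unfolding pcond_def
        proof (intro allI impI)
          fix q assume q: "q \<le> m"
          then have "v!q \<in> set v" using lv by (simp add: less_Suc_eq_le)
          then have "v!q \<noteq> j" using k kj by auto
          then show "(?t!q = 0 \<longrightarrow> ?u!q \<le> j') \<and> (?t!q \<noteq> 0 \<longrightarrow> j' \<le> ?u!q)"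
            using q lv Suc by (auto simp: coll_def less_Suc_eq_le)
        qed
        then show ?thesis using Suc by auto
      qed
    next
      case kj: False
      then have kgt: "Suc j < k" using False k by simp
      have "k - 1 \<notin> set ?u"
      proof
        assume "k - 1 \<in> set ?u"
        then obtain w where "w \<in> set v" "coll j w = k - 1" by auto
        then have "w = k" using kgt by (auto simp: coll_def split: if_splits)
        then show False using k \<open>w \<in> set v\<close> by simp
      qed
      moreover have "k - 1 \<le> N" using k by simp
      ultimately show ?thesis by auto
    qed
  qed
  moreover have "(?u, ?t) \<in> scar (prism N) m" using sig_prism[OF vs j] by (simp only: sig_def)
  ultimately show ?thesis unfolding sig_def Sj_def mem_Collect_eq case_prod_conv by blast
qed

lemma L1':
  assumes vs: "v \<in> scar (simplex (Suc N)) m" and S: "sig j v \<in> Sj N j m" and j: "j \<le> N"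
  shows "v \<in> scar (horn (Suc N) (Suc j)) m"
proof -
  have lv: "length v = Suc m" using vs by simp
  let ?u = "map (coll j) v" and ?t = "map (\<lambda>k. if k \<le> j then 0 else 1::nat) v"
  have d: "\<not> {..N} \<subseteq> set ?u \<or> set ?t \<subseteq> {1} \<or> (\<exists>i<j. pcond m i ?u ?t)"
    using S by (simp add: Sj_def sig_def)
  have "\<exists>k. k \<le> Suc N \<and> k \<noteq> Suc j \<and> k \<notin> set v"
  proof -
    { assume "\<not> {..N} \<subseteq> set ?u"
      then obtain w where w: "w \<le> N" "w \<notin> set ?u" by auto
      have ?thesis
      proof (cases "w \<le> j")
        case True
        then have "w \<notin> set v" using w(2) by (force simp: coll_def)
        then show ?thesis using w True by (intro exI[of _ w]) auto
      next
        case False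
        then have "Suc w \<notin> set v" using w(2) by (force simp: coll_def)
        then show ?thesis using w False by (intro exI[of _ "Suc w"]) auto
      qed }
    moreover
    { assume "set ?t \<subseteq> {1}"
      then have "0 \<notin> set v" by force
      then have ?thesis by (intro exI[of _ 0]) auto }
    moreover
    { assume "\<exists>i<j. pcond m i ?u ?t"
      then obtain i where i: "i < j" "pcond m i ?u ?t" by auto
      have "j \<notin> set v"
      proof
        assume "j \<in> set v"
        then obtain q where q: "q < Suc m" "v!q = j" using lv by (auto simp: in_set_conv_nth)
        then have "q \<le> m" by simp
        then have "(?t!q = 0 \<longrightarrow> ?u!q \<le> i)" using i(2) unfolding pcond_def by blast
        then show False using i q lv by (simp add: coll_def)
      qed
      moreover have "j \<le> Suc N" using j by simp
      ultimately have ?thesis by (intro exI[of _ j]) auto }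
    ultimately show ?thesis using d by blast
  qed
  then have "set v \<union> {Suc j} \<noteq> {..Suc N}" by auto
  then show ?thesis using vs by simp
qed


lemma Sj_Suc_pcond:
  assumes "s \<in> Sj N (Suc j) m" "s \<notin> Sj N j m"
  shows "pcond m j (fst s) (snd s)"
proof -
  obtain u t where st: "s = (u,t)" by force
  show ?thesis using assms st unfolding Sj_def by (auto simp: less_Suc_eq)
qed

lemma psmapD1: "psmap K S Z q \<Longrightarrow> s \<in> S m \<Longrightarrow> s \<in> scar K m"
  unfolding psmap_def by blast
lemma psmapD2: "psmap K S Z q \<Longrightarrow> simp_op m n f \<Longrightarrow> s \<in> S n \<Longrightarrow> sop K m n f s \<in> S m"
  unfolding psmap_def by blast
lemma psmapD3: "psmap K S Z q \<Longrightarrow> s \<in> S m \<Longrightarrow> q m s \<in> scar Z m"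
  unfolding psmap_def by blast
lemma psmapD4: "psmap K S Z q \<Longrightarrow> simp_op m n f \<Longrightarrow> s \<in> S n \<Longrightarrow> q m (sop K m n f s) = sop Z m n f (q n s)"
  unfolding psmap_def by blast

lemma prism_step:
  fixes X :: "'a sset" and Y :: "'b sset"
  assumes rf: "right_fibration X Y p" and j: "j \<le> N"
    and Q: "psmap (prism N) (Sj N j) X Q"
    and Phi: "smorph (prism N) Y Phi"
    and pQ: "\<forall>m s. s \<in> Sj N j m \<longrightarrow> p m (Q m s) = Phi m s"
  shows "\<exists>Q'. psmap (prism N) (Sj N (Suc j)) X Q' \<and> (\<forall>m s. s \<in> Sj N j m \<longrightarrow> Q' m s = Q m s) \<and>
              (\<forall>m s. s \<in> Sj N (Suc j) m \<longrightarrow> p m (Q' m s) = Phi m s)"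
proof -
  define a where "a = (\<lambda>m v. Q m (sig j v))"
  define bb where "bb = (\<lambda>m v. Phi m (sig j v))"
  have a: "smorph (horn (Suc N) (Suc j)) X a"
    unfolding smorph_def
  proof (intro conjI allI impI)
    fix n v assume "v \<in> scar (horn (Suc N) (Suc j)) n"
    then show "a n v \<in> scar X n" unfolding a_def using L1[OF _ j] psmapD3[OF Q] by blast
  next
    fix m n f v assume f: "simp_op m n f" and v: "v \<in> scar (horn (Suc N) (Suc j)) n"
    then have "length v = Suc n" by simp
    then have "sig j (sop (simplex (Suc N)) m n f v) = sop (prism N) m n f (sig j v)"
      using sig_sop[OF f] by blast
    then show "a m (sop (horn (Suc N) (Suc j)) m n f v) = sop X m n f (a n v)"
      unfolding a_def using psmapD4[OF Q f L1[OF v j]] by simp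
  qed
  have bb: "smorph (simplex (Suc N)) Y bb"
    unfolding smorph_def
  proof (intro conjI allI impI)
    fix n v assume "v \<in> scar (simplex (Suc N)) n"
    then show "bb n v \<in> scar Y n" unfolding bb_def using sig_prism[OF _ j] smorphD1[OF Phi] by blast
  next
    fix m n f v assume f: "simp_op m n f" and v: "v \<in> scar (simplex (Suc N)) n"
    then have "length v = Suc n" by simp
    then have "sig j (sop (simplex (Suc N)) m n f v) = sop (prism N) m n f (sig j v)"
      using sig_sop[OF f] by blast
    then show "bb m (sop (simplex (Suc N)) m n f v) = sop Y m n f (bb n v)"
      unfolding bb_def using smorphD2[OF Phi f sig_prism[OF v j]] by simp
  qed
  have pab: "\<forall>m s. s \<in> scar (horn (Suc N) (Suc j)) m \<longrightarrow> p m (a m s) = bb m s"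
    unfolding a_def bb_def using pQ L1[OF _ j] by blast
  have "has_rlp_horn (Suc N) (Suc j) X Y p" using rf j by (simp add: right_fibration_def)
  then obtain l where l: "smorph (simplex (Suc N)) X l"
     and la: "\<forall>m s. s \<in> scar (horn (Suc N) (Suc j)) m \<longrightarrow> l m s = a m s"
     and pl: "\<forall>m s. s \<in> scar (simplex (Suc N)) m \<longrightarrow> p m (l m s) = bb m s"
    unfolding has_rlp_horn_def using a bb pab by blast
  define Q' where "Q' = (\<lambda>m s. if s \<in> Sj N j m then Q m s else l m (unsig s))"
  have key: "s \<in> Sj N (Suc j) m \<Longrightarrow> s \<notin> Sj N j m \<Longrightarrow> sig j (unsig s) = s \<and> unsig s \<in> scar (simplex (Suc N)) m" for s m
  proof -
    assume a1: "s \<in> Sj N (Suc j) m" and a2: "s \<notin> Sj N j m"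
    obtain u t where st: "s = (u,t)" by force
    have "pcond m j u t" using Sj_Suc_pcond[OF a1 a2] st by simp
    moreover have "(u,t) \<in> scar (prism N) m" using a1 st Sj_sub by blast
    ultimately show ?thesis using sig_unsig st by blast
  qed
  have "psmap (prism N) (Sj N (Suc j)) X Q'"
    unfolding psmap_def
  proof (intro conjI allI impI)
    show "Sj N (Suc j) m \<subseteq> scar (prism N) m" for m using Sj_sub by blast
    show "sop (prism N) m n f s \<in> Sj N (Suc j) m" if "simp_op m n f" "s \<in> Sj N (Suc j) n" for m n f s
      using Sj_closed that by blast
    show "Q' m s \<in> scar X m" if "s \<in> Sj N (Suc j) m" for m s
      using that key[OF that] psmapD3[OF Q] smorphD1[OF l] unfolding Q'_def by auto
  next
    fix m n f s assume f: "simp_op m n f" and s: "s \<in> Sj N (Suc j) n"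
    show "Q' m (sop (prism N) m n f s) = sop X m n f (Q' n s)"
    proof (cases "s \<in> Sj N j n")
      case True
      then have "sop (prism N) m n f s \<in> Sj N j m" using Sj_closed f by blast
      then show ?thesis using True psmapD4[OF Q f True] unfolding Q'_def by simp
    next
      case False
      define v where "v = unsig s"
      have sv: "sig j v = s" and v: "v \<in> scar (simplex (Suc N)) n" using key[OF s False] v_def by auto
      define w where "w = sop (simplex (Suc N)) m n f v"
      have w: "w \<in> scar (simplex (Suc N)) m" using simplex_sop_closed[OF f v] w_def by simp
      have sw: "sop (prism N) m n f s = sig j w"
        using sig_sop[OF f, of v j N] v sv w_def by simp
      have "Q' m (sig j w) = l m w"
      proof (cases "sig j w \<in> Sj N j m")
        case True
        then have "w \<in> scar (horn (Suc N) (Suc j)) m" using L1'[OF w _ j] by blast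
        then show ?thesis using True la unfolding Q'_def a_def by simp
      next
        case False then show ?thesis unfolding Q'_def by (simp add: unsig_sig)
      qed
      moreover have "l m w = sop X m n f (l n v)" using smorphD2[OF l f v] w_def by simp
      moreover have "Q' n s = l n v" using False v_def unfolding Q'_def by simp
      ultimately show ?thesis using sw by simp
    qed
  qed
  moreover have "\<forall>m s. s \<in> Sj N j m \<longrightarrow> Q' m s = Q m s" unfolding Q'_def by simp
  moreover have "\<forall>m s. s \<in> Sj N (Suc j) m \<longrightarrow> p m (Q' m s) = Phi m s"
  proof (intro allI impI)
    fix m s assume s: "s \<in> Sj N (Suc j) m"
    show "p m (Q' m s) = Phi m s"
    proof (cases "s \<in> Sj N j m")
      case True then show ?thesis using pQ unfolding Q'_def by (simp del: split_paired_All)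
    next
      case False
      then show ?thesis using key[OF s False] pl unfolding Q'_def bb_def by simp
    qed
  qed
  ultimately show ?thesis by blast
qed

lemma prism_fill:
  fixes X :: "'a sset" and Y :: "'b sset"
  assumes rf: "right_fibration X Y p"
    and D: "psmap (prism N) (Sj N 0) X D"
    and Phi: "smorph (prism N) Y Phi"
    and pD: "\<forall>m s. s \<in> Sj N 0 m \<longrightarrow> p m (D m s) = Phi m s"
  shows "\<exists>Q. smorph (prism N) X Q \<and> (\<forall>m s. s \<in> Sj N 0 m \<longrightarrow> Q m s = D m s) \<and>
             (\<forall>m s. s \<in> scar (prism N) m \<longrightarrow> p m (Q m s) = Phi m s)"
proof -
  have "j \<le> Suc N \<Longrightarrow> \<exists>Q. psmap (prism N) (Sj N j) X Q \<and> (\<forall>m s. s \<in> Sj N 0 m \<longrightarrow> Q m s = D m s) \<and>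
          (\<forall>m s. s \<in> Sj N j m \<longrightarrow> p m (Q m s) = Phi m s)" for j
  proof (induction j)
    case 0 then show ?case using D pD by blast
  next
    case (Suc j)
    then obtain Q where Q: "psmap (prism N) (Sj N j) X Q" "\<forall>m s. s \<in> Sj N 0 m \<longrightarrow> Q m s = D m s"
        "\<forall>m s. s \<in> Sj N j m \<longrightarrow> p m (Q m s) = Phi m s" by auto
    obtain Q' where Q': "psmap (prism N) (Sj N (Suc j)) X Q'" "\<forall>m s. s \<in> Sj N j m \<longrightarrow> Q' m s = Q m s"
        "\<forall>m s. s \<in> Sj N (Suc j) m \<longrightarrow> p m (Q' m s) = Phi m s"
      using prism_step[OF rf _ Q(1) Phi Q(3)] Suc.prems by auto
    have "\<forall>m s. s \<in> Sj N 0 m \<longrightarrow> Q' m s = D m s" using Q(2) Q'(2) Sj_mono[of 0 j] by auto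
    then show ?case using Q' by blast
  qed
  then obtain Q where Q: "psmap (prism N) (Sj N (Suc N)) X Q" "\<forall>m s. s \<in> Sj N 0 m \<longrightarrow> Q m s = D m s"
      "\<forall>m s. s \<in> Sj N (Suc N) m \<longrightarrow> p m (Q m s) = Phi m s" by blast
  have all: "s \<in> Sj N (Suc N) m \<longleftrightarrow> s \<in> scar (prism N) m" for s m using Sj_all Sj_sub by blast
  have "smorph (prism N) X Q"
    unfolding smorph_def using psmapD3[OF Q(1)] psmapD4[OF Q(1)] all by blast
  then show ?thesis using Q all by blast
qed

definition surj_op :: "nat \<Rightarrow> nat \<Rightarrow> (nat \<Rightarrow> nat) \<Rightarrow> bool" where
  "surj_op m k g \<longleftrightarrow> simp_op m k g \<and> (\<forall>j\<le>k. \<exists>i\<le>m. g i = j)"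

definition nondeg :: "'a sset \<Rightarrow> nat \<Rightarrow> 'a \<Rightarrow> bool" where
  "nondeg B k b \<longleftrightarrow> b \<in> scar B k \<and>
     (\<forall>k' g b'. k' < k \<longrightarrow> surj_op k k' g \<longrightarrow> b' \<in> scar B k' \<longrightarrow> b \<noteq> sop B k k' g b')"

lemma surj_op_id: "surj_op m m id"
  by (auto simp: surj_op_def simp_op_id)

lemma surj_op_comp: "surj_op l m g \<Longrightarrow> surj_op m n f \<Longrightarrow> surj_op l n (f \<circ> g)"
  unfolding surj_op_def using simp_op_comp by fastforce

lemma surj_op_cong: "surj_op m k g \<Longrightarrow> (\<And>i. i \<le> m \<Longrightarrow> g i = g' i) \<Longrightarrow> surj_op m k g'"
  unfolding surj_op_def using simp_op_cong by metis

lemma EZ_exists: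
  assumes B: "is_sset B"
  shows "c \<in> scar B m \<Longrightarrow> \<exists>k g b. surj_op m k g \<and> nondeg B k b \<and> c = sop B m k g b"
proof (induction m arbitrary: c rule: less_induct)
  case (less m)
  show ?case
  proof (cases "nondeg B m c")
    case True
    then show ?thesis using surj_op_id sset_id[OF B less.prems] by metis
  next
    case False
    then obtain k' g b' where kg: "k' < m" "surj_op m k' g" "b' \<in> scar B k'" "c = sop B m k' g b'"
      using less.prems by (auto simp: nondeg_def)
    obtain k g2 b where b: "surj_op k' k g2" "nondeg B k b" "b' = sop B k' k g2 b"
      using less.IH[OF kg(1) kg(3)] by blast
    have "c = sop B m k (g2 \<circ> g) b"
      using kg b sset_comp[OF B, of m k' g k g2 b] by (simp add: nondeg_def surj_op_def)
    then show ?thesis using surj_op_comp[OF kg(2) b(1)] b(2) by blast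
  qed
qed

lemma strict_ge:
  assumes "\<forall>a<k. \<phi> a < \<phi> (Suc a)"
  shows "i \<le> k \<Longrightarrow> i + \<phi> 0 \<le> \<phi> i"
proof (induction i)
  case 0 then show ?case by simp
next
  case (Suc i)
  then have "\<phi> i < \<phi> (Suc i)" using assms by simp
  then show ?case using Suc by simp
qed

lemma strict_le:
  assumes "\<forall>a<k. \<phi> a < \<phi> (Suc a)"
  shows "i \<le> k \<Longrightarrow> \<phi> i + (k - i) \<le> \<phi> k"
proof (induction "k - i" arbitrary: i)
  case 0 then show ?case by simp
next
  case (Suc d)
  then have "Suc i \<le> k" "d = k - Suc i" by auto
  then have "\<phi> (Suc i) + (k - Suc i) \<le> \<phi> k" using Suc by blast
  moreover have "\<phi> i < \<phi> (Suc i)" using assms \<open>Suc i \<le> k\<close> by simp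
  ultimately show ?case using \<open>Suc i \<le> k\<close> by simp
qed

lemma strict_dim_le:
  assumes "simp_op k k' \<phi>" "\<forall>a<k. \<phi> a < \<phi> (Suc a)"
  shows "k \<le> k'"
  using strict_ge[OF assms(2), of k] simp_opD2[OF assms(1), of k] by simp

lemma strict_id:
  assumes "simp_op k k \<phi>" "\<forall>a<k. \<phi> a < \<phi> (Suc a)" "i \<le> k"
  shows "\<phi> i = i"
  using strict_ge[OF assms(2) assms(3)] strict_le[OF assms(2) assms(3)] simp_opD2[OF assms(1), of k]
  by simp

lemma strict_mono_on_le:
  fixes \<phi> :: "nat \<Rightarrow> nat"
  assumes "\<forall>a<k. \<phi> a < \<phi> (Suc a)" "i < j" "j \<le> k"
  shows "\<phi> i < \<phi> j"
  using assms(2,3)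
proof (induction j)
  case 0 then show ?case by simp
next
  case (Suc j)
  then have "\<phi> j < \<phi> (Suc j)" using assms(1) by simp
  show ?case
  proof (cases "i = j")
    case True then show ?thesis using \<open>\<phi> j < \<phi> (Suc j)\<close> by simp
  next
    case False
    then have "\<phi> i < \<phi> j" using Suc by simp
    then show ?thesis using \<open>\<phi> j < \<phi> (Suc j)\<close> by simp
  qed
qed

definition sec :: "(nat \<Rightarrow> nat) \<Rightarrow> nat \<Rightarrow> nat \<Rightarrow> nat" where
  "sec g i j = (if j = g i then i else (LEAST i'. g i' = j))"

lemma sec_props:
  assumes g: "surj_op m k g" and i: "i \<le> m"
  shows "simp_op k m (sec g i)" "\<And>j. j \<le> k \<Longrightarrow> g (sec g i j) = j" "sec g i (g i) = i"
proof -
  have gm: "simp_op m k g" and gs: "\<And>j. j \<le> k \<Longrightarrow> \<exists>i\<le>m. g i = j" using g by (auto simp: surj_op_def)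
  have L: "j \<le> k \<Longrightarrow> g (LEAST i'. g i' = j) = j \<and> (LEAST i'. g i' = j) \<le> m" for j
  proof -
    assume "j \<le> k" then obtain i0 where "i0 \<le> m" "g i0 = j" using gs by blast
    then show ?thesis using LeastI[of "\<lambda>i'. g i' = j" i0] Least_le[of "\<lambda>i'. g i' = j" i0] by auto
  qed
  show g2: "\<And>j. j \<le> k \<Longrightarrow> g (sec g i j) = j" using L by (simp add: sec_def)
  show "sec g i (g i) = i" by (simp add: sec_def)
  have bnd: "j \<le> k \<Longrightarrow> sec g i j \<le> m" for j using L i by (simp add: sec_def)
  have mono: "sec g i j1 \<le> sec g i j2" if "j1 \<le> j2" "j2 \<le> k" for j1 j2
  proof (rule ccontr)
    assume "\<not> sec g i j1 \<le> sec g i j2"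
    then have lt: "sec g i j2 < sec g i j1" by simp
    have "j1 \<le> k" using that by simp
    then have "g (sec g i j2) \<le> g (sec g i j1)" using simp_opD1[OF gm, of "sec g i j2" "sec g i j1"] lt bnd by simp
    then have "j2 \<le> j1" using g2 that \<open>j1 \<le> k\<close> by simp
    then have "j1 = j2" using that by simp
    then show False using lt by simp
  qed
  show "simp_op k m (sec g i)" unfolding simp_op_def using mono bnd by blast
qed

definition sdeg :: "nat \<Rightarrow> nat \<Rightarrow> nat" where
  "sdeg a i = (if i \<le> a then i else i - 1)"
definition dface :: "nat \<Rightarrow> nat \<Rightarrow> nat" where
  "dface a i = (if i \<le> a then i else Suc i)"

lemma sdeg_surj:
  assumes a: "a < k" shows "surj_op k (k - 1) (sdeg a)"
  unfolding surj_op_def simp_op_def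
proof (intro conjI allI impI)
  fix i j assume "i \<le> j" "j \<le> k" then show "sdeg a i \<le> sdeg a j" by (auto simp: sdeg_def)
next
  fix i assume "i \<le> k" then show "sdeg a i \<le> k - 1" using a by (auto simp: sdeg_def)
next
  fix j assume j: "j \<le> k - 1"
  show "\<exists>i\<le>k. sdeg a i = j"
  proof (cases "j \<le> a")
    case True then show ?thesis using a by (intro exI[of _ j]) (simp add: sdeg_def)
  next
    case False then show ?thesis using a j by (intro exI[of _ "Suc j"]) (simp add: sdeg_def)
  qed
qed

lemma noninj_degen:
  assumes B: "is_sset B" and \<phi>: "simp_op k k' \<phi>" and b': "b' \<in> scar B k'" and a: "a < k" "\<phi> a = \<phi> (Suc a)"
  shows "sop B k k' \<phi> b' = sop B k (k - 1) (sdeg a) (sop B (k - 1) k' (\<phi> \<circ> dface a) b')"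
proof -
  have d: "simp_op (k - 1) k (dface a)" using a unfolding simp_op_def dface_def by auto
  have s: "simp_op k (k - 1) (sdeg a)" using sdeg_surj[OF a(1)] by (simp add: surj_op_def)
  have c: "simp_op (k - 1) k' (\<phi> \<circ> dface a)" using simp_op_comp[OF d \<phi>] .
  have "sop B k (k - 1) (sdeg a) (sop B (k - 1) k' (\<phi> \<circ> dface a) b') = sop B k k' (\<phi> \<circ> dface a \<circ> sdeg a) b'"
    using sset_comp[OF B s c b'] by simp
  also have "\<dots> = sop B k k' \<phi> b'"
  proof (rule sset_cong[OF B _ _ b'])
    show "simp_op k k' (\<phi> \<circ> dface a \<circ> sdeg a)" using simp_op_comp[OF s c] by (simp add: comp_assoc)
    fix i assume "i \<le> k"
    show "(\<phi> \<circ> dface a \<circ> sdeg a) i = \<phi> i"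
    proof (cases "i \<le> a")
      case True then show ?thesis by (simp add: dface_def sdeg_def)
    next
      case False
      show ?thesis
      proof (cases "i = Suc a")
        case True then show ?thesis using a by (simp add: dface_def sdeg_def)
      next
        case False2: False
        then have "dface a (sdeg a i) = i" using False by (simp add: dface_def sdeg_def)
        then show ?thesis by simp
      qed
    qed
  qed
  finally show ?thesis by simp
qed

lemma nondeg_strict:
  assumes B: "is_sset B" and nb: "nondeg B k b" and \<phi>: "simp_op k k' \<phi>" and b': "b' \<in> scar B k'"
    and eq: "b = sop B k k' \<phi> b'"
  shows "\<forall>a<k. \<phi> a < \<phi> (Suc a)"
proof (intro allI impI)
  fix a assume a: "a < k"
  have "\<phi> a \<le> \<phi> (Suc a)" using simp_opD1[OF \<phi>, of a "Suc a"] a by simp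
  moreover have "\<phi> a \<noteq> \<phi> (Suc a)"
  proof
    assume e: "\<phi> a = \<phi> (Suc a)"
    have d: "simp_op (k - 1) k (dface a)" using a unfolding simp_op_def dface_def by auto
    have "sop B (k - 1) k' (\<phi> \<circ> dface a) b' \<in> scar B (k - 1)"
      using sset_closed[OF B simp_op_comp[OF d \<phi>] b'] .
    moreover have "b = sop B k (k - 1) (sdeg a) (sop B (k - 1) k' (\<phi> \<circ> dface a) b')"
      using noninj_degen[OF B \<phi> b' a e] eq by simp
    moreover have "k - 1 < k" using a by simp
    ultimately show False using nb sdeg_surj[OF a] unfolding nondeg_def by blast
  qed
  ultimately show "\<phi> a < \<phi> (Suc a)" by simp
qed

lemma EZ_core:
  assumes B: "is_sset B" and nb: "nondeg B k b" and g: "surj_op m k g"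
    and g': "simp_op m k' g'" and b': "b' \<in> scar B k'" and eq: "sop B m k g b = sop B m k' g' b'"
    and \<delta>: "simp_op k m \<delta>" "\<And>j. j \<le> k \<Longrightarrow> g (\<delta> j) = j"
  shows "b = sop B k k' (g' \<circ> \<delta>) b'" "\<forall>a<k. (g' \<circ> \<delta>) a < (g' \<circ> \<delta>) (Suc a)" "simp_op k k' (g' \<circ> \<delta>)"
proof -
  have bB: "b \<in> scar B k" using nb by (simp add: nondeg_def)
  have gm: "simp_op m k g" using g by (simp add: surj_op_def)
  have "b = sop B k k (g \<circ> \<delta>) b"
    using sset_id'[OF B simp_op_comp[OF \<delta>(1) gm] _ bB] \<delta>(2) by simp
  also have "\<dots> = sop B k m \<delta> (sop B m k g b)" using sset_comp[OF B \<delta>(1) gm bB] by simp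
  also have "\<dots> = sop B k m \<delta> (sop B m k' g' b')" using eq by simp
  also have "\<dots> = sop B k k' (g' \<circ> \<delta>) b'" using sset_comp[OF B \<delta>(1) g' b'] by simp
  finally show 1: "b = sop B k k' (g' \<circ> \<delta>) b'" .
  show 3: "simp_op k k' (g' \<circ> \<delta>)" using simp_op_comp[OF \<delta>(1) g'] .
  show "\<forall>a<k. (g' \<circ> \<delta>) a < (g' \<circ> \<delta>) (Suc a)" using nondeg_strict[OF B nb 3 b' 1] .
qed

lemma EZ_dim_le:
  assumes B: "is_sset B" and nb: "nondeg B k b" and g: "surj_op m k g"
    and g': "simp_op m k' g'" and b': "b' \<in> scar B k'" and eq: "sop B m k g b = sop B m k' g' b'"
  shows "k \<le> k'"
proof -
  have "m \<ge> 0" by simp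
  obtain i where i: "i \<le> m" using le0 by blast
  note s = sec_props[OF g i]
  show ?thesis using EZ_core[OF B nb g g' b' eq s(1) s(2)] strict_dim_le by blast
qed

lemma EZ_unique:
  assumes B: "is_sset B" and nb: "nondeg B k b" and g: "surj_op m k g"
    and nb': "nondeg B k' b'" and g': "surj_op m k' g'" and eq: "sop B m k g b = sop B m k' g' b'"
  shows "k = k'" "b = b'" "\<And>i. i \<le> m \<Longrightarrow> g i = g' i"
proof -
  have gm': "simp_op m k' g'" and gm: "simp_op m k g" using g g' by (auto simp: surj_op_def)
  have bB: "b \<in> scar B k" and bB': "b' \<in> scar B k'" using nb nb' by (auto simp: nondeg_def)
  show kk: "k = k'" using EZ_dim_le[OF B nb g gm' bB' eq] EZ_dim_le[OF B nb' g' gm bB eq[symmetric]] by simp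
  have X: "\<And>i. i \<le> m \<Longrightarrow> b = sop B k k' (g' \<circ> sec g i) b' \<and> (\<forall>j\<le>k. (g' \<circ> sec g i) j = j)"
  proof -
    fix i assume i: "i \<le> m"
    note s = sec_props[OF g i]
    note c = EZ_core[OF B nb g gm' bB' eq s(1) s(2)]
    show "b = sop B k k' (g' \<circ> sec g i) b' \<and> (\<forall>j\<le>k. (g' \<circ> sec g i) j = j)"
      using c strict_id[of k "g' \<circ> sec g i"] kk by auto
  qed
  show "b = b'"
  proof -
    have "b = sop B k k' (g' \<circ> sec g 0) b'" using X by blast
    also have "\<dots> = b'" using sset_id'[OF B _ _ bB'] X[of 0] kk EZ_core(3)[OF B nb g gm' bB' eq sec_props(1,2)[OF g le0]]
      by auto
    finally show ?thesis .
  qed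
  fix i assume i: "i \<le> m"
  have "g i \<le> k" using simp_opD2[OF gm i] .
  then have "g' (sec g i (g i)) = g i" using X[OF i] by auto
  then show "g i = g' i" using sec_props(3)[OF g i] by simp
qed


definition ez :: "'a sset \<Rightarrow> nat \<Rightarrow> 'a \<Rightarrow> nat \<times> (nat \<Rightarrow> nat) \<times> 'a" where
  "ez B m c = (SOME (k,g,b). surj_op m k g \<and> nondeg B k b \<and> c = sop B m k g b)"

lemma ez_spec:
  assumes B: "is_sset B" and c: "c \<in> scar B m" and e: "ez B m c = (k,g,b)"
  shows "surj_op m k g" "nondeg B k b" "c = sop B m k g b"
proof -
  have "\<exists>x. (case x of (k,g,b) \<Rightarrow> surj_op m k g \<and> nondeg B k b \<and> c = sop B m k g b)"
    using EZ_exists[OF B c] by auto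
  then have "(case ez B m c of (k,g,b) \<Rightarrow> surj_op m k g \<and> nondeg B k b \<and> c = sop B m k g b)"
    unfolding ez_def by (rule someI_ex)
  then show "surj_op m k g" "nondeg B k b" "c = sop B m k g b" using e by auto
qed

lemma ez_eq:
  assumes B: "is_sset B" and g: "surj_op m k g" and nb: "nondeg B k b" and e: "ez B m (sop B m k g b) = (k',g',b')"
  shows "k' = k" "b' = b" "\<And>i. i \<le> m \<Longrightarrow> g' i = g i"
proof -
  have bB: "b \<in> scar B k" using nb by (simp add: nondeg_def)
  have gm: "simp_op m k g" using g by (simp add: surj_op_def)
  have c: "sop B m k g b \<in> scar B m" using sset_closed[OF B gm bB] .
  note s = ez_spec[OF B c e]
  show "k' = k" "b' = b" "\<And>i. i \<le> m \<Longrightarrow> g' i = g i"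
    using EZ_unique[OF B s(2) s(1) nb g s(3)[symmetric]] by auto
qed

lemma ez_dim_le:
  assumes B: "is_sset B" and f: "simp_op m r f" and b0: "b0 \<in> scar B r"
    and e: "ez B m (sop B m r f b0) = (k,g,b)"
  shows "k \<le> r"
proof -
  have c: "sop B m r f b0 \<in> scar B m" using sset_closed[OF B f b0] .
  note s = ez_spec[OF B c e]
  show ?thesis using EZ_dim_le[OF B s(2) s(1) f b0 s(3)[symmetric]] .
qed

lemma ez_dim_less:
  assumes B: "is_sset B" and f: "simp_op m r f" and b0: "b0 \<in> scar B r"
    and ns: "\<not> (\<forall>j\<le>r. \<exists>i\<le>m. f i = j)"
    and e: "ez B m (sop B m r f b0) = (k,g,b)"
  shows "k < r"
proof -
  have c: "sop B m r f b0 \<in> scar B m" using sset_closed[OF B f b0] .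
  note s = ez_spec[OF B c e]
  note sp = sec_props[OF s(1) le0]
  note co = EZ_core[OF B s(2) s(1) f b0 s(3)[symmetric] sp(1) sp(2)]
  have kr: "k \<le> r" using strict_dim_le[OF co(3) co(2)] .
  show ?thesis
  proof (rule ccontr)
    assume "\<not> k < r" then have kr': "k = r" using kr by simp
    obtain w where w: "w \<le> r" "\<forall>i\<le>m. f i \<noteq> w" using ns by blast
    have "(f \<circ> sec g 0) w = w" using strict_id[of r "f \<circ> sec g 0" w] co(2,3) kr' w(1) by simp
    moreover have "sec g 0 w \<le> m" using simp_opD2[OF sp(1)] w(1) kr' by simp
    ultimately show False using w(2) by auto
  qed
qed

lemma is_sset_spullback:
  assumes X: "is_sset X" and Z: "is_sset Z" and p: "smorph X Y p" and q: "smorph Z Y q"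
  shows "is_sset (spullback X p Z q)"
  unfolding is_sset_def
proof (intro conjI allI impI)
  fix m n f xz assume f: "simp_op m n f" and xz: "xz \<in> scar (spullback X p Z q) n"
  obtain x z where e: "xz = (x,z)" by force
  have x: "x \<in> scar X n" and z: "z \<in> scar Z n" and pq: "p n x = q n z" using xz e by (auto simp: spullback_def)
  have "p m (sop X m n f x) = q m (sop Z m n f z)" using smorphD2[OF p f x] smorphD2[OF q f z] pq by simp
  then show "sop (spullback X p Z q) m n f xz \<in> scar (spullback X p Z q) m"
    using e sset_closed[OF X f x] sset_closed[OF Z f z] by (simp add: spullback_def)
next
  fix n xz assume xz: "xz \<in> scar (spullback X p Z q) n"
  obtain x z where e: "xz = (x,z)" by force
  have x: "x \<in> scar X n" and z: "z \<in> scar Z n" using xz e by (auto simp: spullback_def)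
  show "sop (spullback X p Z q) n n id xz = xz" using e sset_id[OF X x] sset_id[OF Z z] by (simp add: spullback_def)
next
  fix l m n g f xz assume g: "simp_op l m g" and f: "simp_op m n f" and xz: "xz \<in> scar (spullback X p Z q) n"
  obtain x z where e: "xz = (x,z)" by force
  have x: "x \<in> scar X n" and z: "z \<in> scar Z n" using xz e by (auto simp: spullback_def)
  show "sop (spullback X p Z q) l m g (sop (spullback X p Z q) m n f xz) = sop (spullback X p Z q) l n (f \<circ> g) xz"
    using e sset_comp[OF X g f x] sset_comp[OF Z g f z] by (simp add: spullback_def)
next
  fix m n f f' xz assume f: "simp_op m n f" and ff: "\<forall>i\<le>m. f i = f' i" and xz: "xz \<in> scar (spullback X p Z q) n"
  obtain x z where e: "xz = (x,z)" by force
  have x: "x \<in> scar X n" and z: "z \<in> scar Z n" using xz e by (auto simp: spullback_def)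
  show "sop (spullback X p Z q) m n f xz = sop (spullback X p Z q) m n f' xz"
    using e sset_cong[OF X f _ x, of f'] sset_cong[OF Z f _ z, of f'] ff by (simp add: spullback_def)
qed

lemma fbar_simp_op: "simp_op m n f \<Longrightarrow> simp_op (Suc m) (Suc n) (fbar f)"
  unfolding simp_op_def fbar_def by auto

lemma fbar_0[simp]: "fbar f 0 = 0" and fbar_Suc[simp]: "fbar f (Suc i) = Suc (f i)"
  by (auto simp: fbar_def)

definition gt :: "nat list \<Rightarrow> nat \<Rightarrow> nat" where
  "gt t k = (if k = 0 then 0 else if t!(k-1) = 0 then 0 else k)"

lemma gt_simp_op:
  assumes t: "t \<in> scar (simplex 1) m"
  shows "simp_op (Suc m) (Suc m) (gt t)"
  unfolding simp_op_def
proof (intro conjI allI impI)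
  fix i j assume ij: "i \<le> j" "j \<le> Suc m"
  show "gt t i \<le> gt t j"
  proof (cases "gt t i = 0")
    case False
    then have i0: "i \<noteq> 0" "t!(i-1) \<noteq> 0" by (auto simp: gt_def split: if_splits)
    have "t!(i-1) \<le> t!(j-1)" using t ij i0 by (auto intro!: sorted_nth_mono)
    then have "t!(j-1) \<noteq> 0" using i0 by simp
    then show ?thesis using ij i0 by (simp add: gt_def)
  qed simp
next
  fix i assume "i \<le> Suc m" then show "gt t i \<le> Suc m" by (simp add: gt_def)
qed

locale rfib =
  fixes X :: "'a sset" and Y :: "'b sset" and p :: "nat \<Rightarrow> 'a \<Rightarrow> 'b" and y :: 'b
  assumes X: "is_sset X" and Y: "is_sset Y" and rf: "right_fibration X Y p" and y: "y \<in> scar Y 0"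
begin

abbreviation "B \<equiv> right_hofib X Y p y"
abbreviation "P \<equiv> path_space Y y"

lemma pSM: "smorph X Y p" using rf by (simp add: right_fibration_def)

definition base :: "nat \<Rightarrow> 'b" where "base m = sop Y (Suc m) 0 (\<lambda>_. 0) y"

lemma P_scar: "z \<in> scar P n \<longleftrightarrow> z \<in> scar Y (Suc n) \<and> sop Y 0 (Suc n) (\<lambda>_. 0) z = y"
  by (simp add: path_space_def)
lemma P_sop: "sop P m n f z = sop Y (Suc m) (Suc n) (fbar f) z"
  by (simp add: path_space_def)

lemma is_sset_P: "is_sset P"
  unfolding is_sset_def P_sop
proof (intro conjI allI impI)
  fix m n f z assume f: "simp_op m n f" and z: "z \<in> scar P n"
  have zY: "z \<in> scar Y (Suc n)" and z0: "sop Y 0 (Suc n) (\<lambda>_. 0) z = y" using z by (auto simp: P_scar)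
  have "sop Y 0 (Suc m) (\<lambda>_. 0) (sop Y (Suc m) (Suc n) (fbar f) z) = sop Y 0 (Suc n) (fbar f \<circ> (\<lambda>_. 0)) z"
    using sset_comp[OF Y simp_op_const[of 0 "Suc m" 0] fbar_simp_op[OF f] zY] by simp
  also have "\<dots> = y" using z0 by (simp add: comp_def)
  finally show "sop Y (Suc m) (Suc n) (fbar f) z \<in> scar P m"
    using sset_closed[OF Y fbar_simp_op[OF f] zY] by (simp add: P_scar)
next
  fix n z assume z: "z \<in> scar P n"
  have zY: "z \<in> scar Y (Suc n)" using z by (auto simp: P_scar)
  show "sop Y (Suc n) (Suc n) (fbar id) z = z"
    using sset_id'[OF Y fbar_simp_op[OF simp_op_id] _ zY] by (simp add: fbar_def)
next
  fix l m n g f z assume g: "simp_op l m g" and f: "simp_op m n f" and z: "z \<in> scar P n"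
  have zY: "z \<in> scar Y (Suc n)" using z by (auto simp: P_scar)
  have "sop Y (Suc l) (Suc m) (fbar g) (sop Y (Suc m) (Suc n) (fbar f) z) = sop Y (Suc l) (Suc n) (fbar f \<circ> fbar g) z"
    using sset_comp[OF Y fbar_simp_op[OF g] fbar_simp_op[OF f] zY] .
  also have "\<dots> = sop Y (Suc l) (Suc n) (fbar (f \<circ> g)) z"
    using sset_cong[OF Y simp_op_comp[OF fbar_simp_op[OF g] fbar_simp_op[OF f]] _ zY, of "fbar (f \<circ> g)"]
    by (simp add: fbar_def)
  finally show "sop Y (Suc l) (Suc m) (fbar g) (sop Y (Suc m) (Suc n) (fbar f) z) = sop Y (Suc l) (Suc n) (fbar (f \<circ> g)) z" .
next
  fix m n f f' z assume f: "simp_op m n f" and ff: "\<forall>i\<le>m. f i = f' i" and z: "z \<in> scar P n"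
  have zY: "z \<in> scar Y (Suc n)" using z by (auto simp: P_scar)
  show "sop Y (Suc m) (Suc n) (fbar f) z = sop Y (Suc m) (Suc n) (fbar f') z"
    using sset_cong[OF Y fbar_simp_op[OF f] _ zY, of "fbar f'"] ff by (simp add: fbar_def)
qed

lemma jbar_in: "z \<in> scar Y (Suc n) \<Longrightarrow> jbar Y n z \<in> scar Y n"
  unfolding jbar_def by (rule sset_closed[OF Y]) (auto simp: simp_op_def)

lemma jbar_nat:
  assumes f: "simp_op m n f" and z: "z \<in> scar Y (Suc n)"
  shows "jbar Y m (sop Y (Suc m) (Suc n) (fbar f) z) = sop Y m n f (jbar Y n z)"
proof -
  have s1: "simp_op m (Suc m) Suc" and s2: "simp_op n (Suc n) Suc" by (auto simp: simp_op_def)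
  have "jbar Y m (sop Y (Suc m) (Suc n) (fbar f) z) = sop Y m (Suc n) (fbar f \<circ> Suc) z"
    unfolding jbar_def using sset_comp[OF Y s1 fbar_simp_op[OF f] z] .
  also have "\<dots> = sop Y m (Suc n) (Suc \<circ> f) z"
    using sset_cong[OF Y simp_op_comp[OF s1 fbar_simp_op[OF f]] _ z, of "Suc \<circ> f"] by simp
  also have "\<dots> = sop Y m n f (jbar Y n z)"
    unfolding jbar_def using sset_comp[OF Y f s2 z] by simp
  finally show ?thesis .
qed

lemma jbar_smorph: "smorph P Y (jbar Y)"
  unfolding smorph_def using jbar_in jbar_nat by (auto simp: P_scar P_sop)

lemma B_scar: "(x,z) \<in> scar B n \<longleftrightarrow> x \<in> scar X n \<and> z \<in> scar P n \<and> p n x = jbar Y n z"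
  by (simp add: right_hofib_def spullback_def)
lemma B_sop: "sop B m n f (x,z) = (sop X m n f x, sop P m n f z)"
  by (simp add: right_hofib_def spullback_def)
lemma B_sop_fst: "fst (sop B m n f c) = sop X m n f (fst c)"
  by (cases c) (simp add: B_sop)
lemma B_sop_snd: "snd (sop B m n f c) = sop P m n f (snd c)"
  by (cases c) (simp add: B_sop)
lemma B_fst: "c \<in> scar B n \<Longrightarrow> fst c \<in> scar X n"
  by (cases c) (simp add: B_scar)
lemma B_snd: "c \<in> scar B n \<Longrightarrow> snd c \<in> scar P n"
  by (cases c) (simp add: B_scar)
lemma B_pj: "c \<in> scar B n \<Longrightarrow> p n (fst c) = jbar Y n (snd c)"
  by (cases c) (simp add: B_scar)

lemma is_sset_B: "is_sset B"
  unfolding right_hofib_def using is_sset_spullback[OF X is_sset_P pSM jbar_smorph] .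

lemma const_P:
  assumes z: "z \<in> scar P m" and g: "\<And>i. i \<le> k \<Longrightarrow> g i = 0"
  shows "sop Y k (Suc m) g z = sop Y k 0 (\<lambda>_. 0) y"
proof -
  have zY: "z \<in> scar Y (Suc m)" and z0: "sop Y 0 (Suc m) (\<lambda>_. 0) z = y" using z by (auto simp: P_scar)
  have e1: "sop Y k 0 (\<lambda>_. 0) (sop Y 0 (Suc m) (\<lambda>_. 0) z) = sop Y k (Suc m) (\<lambda>_. 0) z"
    using sset_comp[OF Y simp_op_const[of 0 0 k] simp_op_const[of 0 "Suc m" 0] zY] by (simp add: comp_def)
  have e2: "sop Y k (Suc m) (\<lambda>_. 0) z = sop Y k (Suc m) g z"
    using sset_cong[OF Y _ _ zY, of k "\<lambda>_. 0" g] g by (simp add: simp_op_def)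
  show ?thesis using e1 e2 z0 by simp
qed

lemma base_P: "base m \<in> scar P m"
proof -
  have c: "simp_op (Suc m) 0 (\<lambda>_. 0)" by (simp add: simp_op_def)
  have "sop Y 0 (Suc m) (\<lambda>_. 0) (base m) = sop Y 0 0 (\<lambda>_. 0) y"
    unfolding base_def using sset_comp[OF Y simp_op_const[of 0 "Suc m" 0] c y] by (simp add: comp_def)
  also have "\<dots> = y" using sset_id'[OF Y _ _ y] by (simp add: simp_op_def)
  finally show ?thesis unfolding P_scar base_def using sset_closed[OF Y c y] by simp
qed

lemma base_comp:
  assumes g: "simp_op k (Suc m) g"
  shows "sop Y k (Suc m) g (base m) = sop Y k 0 (\<lambda>_. 0) y"
proof -
  have c: "simp_op (Suc m) 0 (\<lambda>_. 0)" by (simp add: simp_op_def)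
  have "sop Y k (Suc m) g (base m) = sop Y k 0 ((\<lambda>_. 0) \<circ> g) y"
    unfolding base_def using sset_comp[OF Y g c y] .
  then show ?thesis by (simp add: comp_def)
qed

lemma base_sop: "simp_op m n f \<Longrightarrow> sop P m n f (base n) = base m"
  unfolding P_sop base_comp[OF fbar_simp_op] base_def by (rule base_comp[unfolded base_def]) (rule fbar_simp_op)

definition hP :: "nat \<Rightarrow> ('a \<times> 'b) \<Rightarrow> nat list \<Rightarrow> 'b" where
  "hP m c t = sop Y (Suc m) (Suc m) (gt t) (snd c)"

definition phi :: "nat \<Rightarrow> ('a \<times> 'b) \<Rightarrow> nat list \<Rightarrow> 'b" where
  "phi m c t = jbar Y m (hP m c t)"

lemma hP_in:
  assumes c: "c \<in> scar B m" and t: "t \<in> scar (simplex 1) m"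
  shows "hP m c t \<in> scar P m"
proof -
  have z: "snd c \<in> scar P m" using B_snd[OF c] .
  then have zY: "snd c \<in> scar Y (Suc m)" and z0: "sop Y 0 (Suc m) (\<lambda>_. 0) (snd c) = y" by (auto simp: P_scar)
  have "sop Y 0 (Suc m) (\<lambda>_. 0) (hP m c t) = sop Y 0 (Suc m) (gt t \<circ> (\<lambda>_. 0)) (snd c)"
    unfolding hP_def using sset_comp[OF Y simp_op_const[of 0 "Suc m" 0] gt_simp_op[OF t] zY] by simp
  also have "\<dots> = y" using z0 by (simp add: gt_def comp_def)
  finally show ?thesis using sset_closed[OF Y gt_simp_op[OF t] zY] unfolding P_scar hP_def by simp
qed

lemma phi_in:
  assumes c: "c \<in> scar B m" and t: "t \<in> scar (simplex 1) m"
  shows "phi m c t \<in> scar Y m"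
  unfolding phi_def using hP_in[OF c t] jbar_in by (simp add: P_scar)

lemma hP_nat:
  assumes f: "simp_op m' m f" and c: "c \<in> scar B m" and t: "t \<in> scar (simplex 1) m"
  shows "hP m' (sop B m' m f c) (sop (simplex 1) m' m f t) = sop P m' m f (hP m c t)"
proof -
  let ?t = "sop (simplex 1) m' m f t"
  have t': "?t \<in> scar (simplex 1) m'" using simplex_sop_closed[OF f t] .
  have zY: "snd c \<in> scar Y (Suc m)" using B_snd[OF c] by (simp add: P_scar)
  have "hP m' (sop B m' m f c) ?t = sop Y (Suc m') (Suc m') (gt ?t) (sop Y (Suc m') (Suc m) (fbar f) (snd c))"
    unfolding hP_def B_sop_snd P_sop ..
  also have "\<dots> = sop Y (Suc m') (Suc m) (fbar f \<circ> gt ?t) (snd c)"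
    using sset_comp[OF Y gt_simp_op[OF t'] fbar_simp_op[OF f] zY] .
  also have "\<dots> = sop Y (Suc m') (Suc m) (gt t \<circ> fbar f) (snd c)"
  proof (rule sset_cong[OF Y simp_op_comp[OF gt_simp_op[OF t'] fbar_simp_op[OF f]] _ zY])
    fix i assume i: "i \<le> Suc m'"
    show "(fbar f \<circ> gt ?t) i = (gt t \<circ> fbar f) i"
    proof (cases i)
      case 0 then show ?thesis by (simp add: gt_def)
    next
      case (Suc i')
      then have "i' < Suc m'" using i by simp
      then show ?thesis using Suc by (simp add: gt_def)
    qed
  qed
  also have "\<dots> = sop P m' m f (hP m c t)"
    unfolding hP_def P_sop using sset_comp[OF Y fbar_simp_op[OF f] gt_simp_op[OF t] zY] by simp
  finally show ?thesis .
qed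

lemma phi_nat:
  assumes f: "simp_op m' m f" and c: "c \<in> scar B m" and t: "t \<in> scar (simplex 1) m"
  shows "phi m' (sop B m' m f c) (sop (simplex 1) m' m f t) = sop Y m' m f (phi m c t)"
  unfolding phi_def hP_nat[OF f c t] P_sop
  using jbar_nat[OF f] hP_in[OF c t] by (simp add: P_scar)

lemma hP_ones:
  assumes c: "c \<in> scar B m" and t: "t \<in> scar (simplex 1) m" "set t \<subseteq> {1}"
  shows "hP m c t = snd c"
proof -
  have zY: "snd c \<in> scar Y (Suc m)" using B_snd[OF c] by (simp add: P_scar)
  have "\<And>i. i \<le> Suc m \<Longrightarrow> gt t i = i"
  proof -
    fix i assume i: "i \<le> Suc m"
    show "gt t i = i"
    proof (cases i)
      case (Suc i')
      then have "t!i' \<in> set t" using i t by (simp add: less_Suc_eq_le)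
      then show ?thesis using Suc t by (auto simp: gt_def)
    qed (simp add: gt_def)
  qed
  then show ?thesis unfolding hP_def using sset_id'[OF Y gt_simp_op[OF t(1)] _ zY] by simp
qed

lemma hP_zeros:
  assumes c: "c \<in> scar B m"
  shows "hP m c (replicate (Suc m) 0) = base m"
  unfolding hP_def base_def
  by (rule const_P[OF B_snd[OF c]]) (auto simp: gt_def nth_replicate simp del: replicate_Suc)

lemma hP_A:
  assumes c: "c \<in> scar B m" and A: "snd c = base m" and t: "t \<in> scar (simplex 1) m"
  shows "hP m c t = base m"
  unfolding hP_def A using base_comp[OF gt_simp_op[OF t]] by (simp add: base_def)

end

context rfib
begin

lemma A_closed: "simp_op m n f \<Longrightarrow> snd c = base n \<Longrightarrow> snd (sop B m n f c) = base m"
  by (simp add: B_sop_snd base_sop)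

lemma A_from_surj:
  assumes g: "surj_op m k g" and b: "b \<in> scar B k" and A: "snd (sop B m k g b) = base m"
  shows "snd b = base k"
proof -
  note s = sec_props[OF g le0]
  have gm: "simp_op m k g" using g by (simp add: surj_op_def)
  have "b = sop B k k (g \<circ> sec g 0) b"
    using sset_id'[OF is_sset_B simp_op_comp[OF s(1) gm] _ b] s(2) by simp
  also have "\<dots> = sop B k m (sec g 0) (sop B m k g b)"
    using sset_comp[OF is_sset_B s(1) gm b] by simp
  finally have "snd b = snd (sop B k m (sec g 0) (sop B m k g b))" by simp
  also have "\<dots> = base k" using A_closed[OF s(1) A] .
  finally show ?thesis .
qed

definition Dat :: "(nat \<Rightarrow> ('a \<times> 'b) \<times> nat list \<Rightarrow> 'a) \<Rightarrow> nat \<Rightarrow> ('a \<times> 'b) \<Rightarrow> nat \<Rightarrow> nat list \<times> nat list \<Rightarrow> 'a" where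
 "Dat HH n b m s = (if {..n} \<subseteq> set (fst s) then fst (sop B m n (nth (fst s)) b)
                    else HH m (sop B m n (nth (fst s)) b, snd s))"

definition Phib :: "nat \<Rightarrow> ('a \<times> 'b) \<Rightarrow> nat \<Rightarrow> nat list \<times> nat list \<Rightarrow> 'b" where
 "Phib n b m s = phi m (sop B m n (nth (fst s)) b) (snd s)"

definition good :: "nat \<Rightarrow> ('a \<times> 'b) \<Rightarrow> (nat \<Rightarrow> nat list \<times> nat list \<Rightarrow> 'a) \<Rightarrow> (nat \<Rightarrow> ('a \<times> 'b) \<times> nat list \<Rightarrow> 'a) \<Rightarrow> bool" where
 "good n b Q HH \<longleftrightarrow> smorph (prism n) X Q \<and> (\<forall>m s. s \<in> Sj n 0 m \<longrightarrow> Q m s = Dat HH n b m s) \<and>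
    (\<forall>m s. s \<in> scar (prism n) m \<longrightarrow> p m (Q m s) = Phib n b m s) \<and>
    (snd b = base n \<longrightarrow> (\<forall>m s. s \<in> scar (prism n) m \<longrightarrow> Q m s = fst (sop B m n (nth (fst s)) b)))"

definition Hof :: "(nat \<Rightarrow> ('a \<times> 'b) \<Rightarrow> nat \<Rightarrow> nat list \<times> nat list \<Rightarrow> 'a) \<Rightarrow> nat \<Rightarrow> ('a \<times> 'b) \<times> nat list \<Rightarrow> 'a" where
 "Hof T m ct = (case ez B m (fst ct) of (k,g,b) \<Rightarrow> T k b m (map g [0..<Suc m], snd ct))"

primrec Tab :: "nat \<Rightarrow> nat \<Rightarrow> ('a \<times> 'b) \<Rightarrow> nat \<Rightarrow> nat list \<times> nat list \<Rightarrow> 'a" where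
  "Tab 0 = (\<lambda>_ _ _ _. undefined)"
| "Tab (Suc n) = (Tab n)(n := (\<lambda>b. SOME Q. good n b Q (Hof (Tab n))))"

definition FF :: "nat \<Rightarrow> ('a \<times> 'b) \<Rightarrow> nat \<Rightarrow> nat list \<times> nat list \<Rightarrow> 'a" where
  "FF k = Tab (Suc k) k"

definition HH :: "nat \<Rightarrow> ('a \<times> 'b) \<times> nat list \<Rightarrow> 'a" where
  "HH = Hof FF"

lemma Tab_FF: "k < n \<Longrightarrow> Tab n k = FF k"
proof (induction n)
  case 0 then show ?case by simp
next
  case (Suc n)
  then show ?case by (cases "k = n") (auto simp: FF_def)
qed

lemma Hof_Tab:
  assumes "fst (ez B m c) < n"
  shows "Hof (Tab n) m (c,t) = HH m (c,t)"
  using assms Tab_FF unfolding HH_def Hof_def by (auto split: prod.splits)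


lemma sop_nth_comp:
  assumes K: "is_sset K" and u: "u \<in> scar (simplex n) m" and f: "simp_op m' m f" and b: "b \<in> scar K n"
  shows "sop K m' n (nth (map (\<lambda>i. u!f i) [0..<Suc m'])) b = sop K m' m f (sop K m n (nth u) b)"
proof -
  have un: "simp_op m n (nth u)" using sorted_nth_simp_op[OF u] .
  have "sop K m' m f (sop K m n (nth u) b) = sop K m' n (nth u \<circ> f) b" using sset_comp[OF K f un b] .
  also have "\<dots> = sop K m' n (nth (map (\<lambda>i. u!f i) [0..<Suc m'])) b"
    by (rule sset_cong[OF K simp_op_comp[OF f un] _ b]) (simp add: less_Suc_eq_le)
  finally show ?thesis by simp
qed

lemma nonsurj_edim:
  assumes b: "b \<in> scar B n" and u: "u \<in> scar (simplex n) m" and ns: "\<not> {..n} \<subseteq> set u"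
  shows "fst (ez B m (sop B m n (nth u) b)) < n"
proof -
  obtain k g b' where e: "ez B m (sop B m n (nth u) b) = (k,g,b')" by (metis prod_cases3)
  have "\<not> (\<forall>j\<le>n. \<exists>i\<le>m. u!i = j)"
  proof
    assume a: "\<forall>j\<le>n. \<exists>i\<le>m. u!i = j"
    have "{..n} \<subseteq> set u"
    proof
      fix j assume "j \<in> {..n}"
      then obtain i where "i \<le> m" "u!i = j" using a by auto
      then show "j \<in> set u" using u by (auto simp: in_set_conv_nth less_Suc_eq_le)
    qed
    then show False using ns by simp
  qed
  then show ?thesis using ez_dim_less[OF is_sset_B sorted_nth_simp_op[OF u] b _ e] e by simp
qed

lemma Dat_Tab:
  assumes b: "b \<in> scar B n" and s: "s \<in> scar (prism n) m"
  shows "Dat (Hof (Tab n)) n b m s = Dat HH n b m s"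
proof -
  obtain u t where st: "s = (u,t)" by force
  have u: "u \<in> scar (simplex n) m" using s st by simp
  show ?thesis
    using nonsurj_edim[OF b u] Hof_Tab st unfolding Dat_def by auto
qed

lemma good_Tab:
  assumes b: "b \<in> scar B n"
  shows "good n b Q (Hof (Tab n)) \<longleftrightarrow> good n b Q HH"
  unfolding good_def using Dat_Tab[OF b] Sj_sub by metis

lemma FF_good:
  assumes b: "b \<in> scar B n" and ex: "\<exists>Q. good n b Q HH"
  shows "good n b (FF n b) HH"
proof -
  have "FF n b = (SOME Q. good n b Q (Hof (Tab n)))" by (simp add: FF_def)
  moreover have "\<exists>Q. good n b Q (Hof (Tab n))" using ex good_Tab[OF b] by blast
  ultimately show ?thesis using someI_ex good_Tab[OF b] by metis
qed

definition allgood :: "nat \<Rightarrow> bool" where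
  "allgood n \<longleftrightarrow> (\<forall>k<n. \<forall>b. nondeg B k b \<longrightarrow> good k b (FF k b) HH)"

lemma ez_list:
  assumes c: "c \<in> scar B m" and e: "ez B m c = (k,g,b)"
  shows "map g [0..<Suc m] \<in> scar (simplex k) m" "{..k} \<subseteq> set (map g [0..<Suc m])"
    "sop B m k (nth (map g [0..<Suc m])) b = c" "HH m (c,t) = FF k b m (map g [0..<Suc m], t)"
    "surj_op m k g" "nondeg B k b"
proof -
  note s = ez_spec[OF is_sset_B c e]
  show "surj_op m k g" "nondeg B k b" using s by auto
  have gm: "simp_op m k g" using s by (simp add: surj_op_def)
  have bB: "b \<in> scar B k" using s by (simp add: nondeg_def)
  show "map g [0..<Suc m] \<in> scar (simplex k) m"
    using gm by (auto simp: sorted_iff_nth_mono simp_op_def less_Suc_eq_le)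
  show "{..k} \<subseteq> set (map g [0..<Suc m])"
    using s(1) by (force simp: surj_op_def less_Suc_eq_le)
  have "sop B m k (nth (map g [0..<Suc m])) b = sop B m k g b"
    using sset_cong[OF is_sset_B gm _ bB, of "nth (map g [0..<Suc m])"] by (simp add: less_Suc_eq_le)
  then show "sop B m k (nth (map g [0..<Suc m])) b = c" using s by simp
  show "HH m (c,t) = FF k b m (map g [0..<Suc m], t)" using e by (simp add: HH_def Hof_def)
qed

lemma H_props:
  assumes ag: "allgood n" and c: "c \<in> scar B m" and lt: "fst (ez B m c) < n" and t: "t \<in> scar (simplex 1) m"
  shows "HH m (c,t) \<in> scar X m" "p m (HH m (c,t)) = phi m c t"
    "set t \<subseteq> {1} \<Longrightarrow> HH m (c,t) = fst c" "snd c = base m \<Longrightarrow> HH m (c,t) = fst c"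
    "simp_op m' m f \<Longrightarrow> HH m' (sop B m' m f c, sop (simplex 1) m' m f t) = sop X m' m f (HH m (c,t))"
proof -
  obtain k g b where e: "ez B m c = (k,g,b)" by (metis prod_cases3)
  note L = ez_list[OF c e]
  define u where "u = map g [0..<Suc m]"
  have kn: "k < n" using lt e by simp
  have gd: "good k b (FF k b) HH" using ag kn L(6) unfolding allgood_def by blast
  have sm: "smorph (prism k) X (FF k b)" and Dq: "\<forall>m s. s \<in> Sj k 0 m \<longrightarrow> FF k b m s = Dat HH k b m s"
    and pq: "\<forall>m s. s \<in> scar (prism k) m \<longrightarrow> p m (FF k b m s) = Phib k b m s"
    and Aq: "snd b = base k \<longrightarrow> (\<forall>m s. s \<in> scar (prism k) m \<longrightarrow> FF k b m s = fst (sop B m k (nth (fst s)) b))"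
    using gd unfolding good_def by blast+
  have u: "u \<in> scar (simplex k) m" and us: "{..k} \<subseteq> set u" and uc: "sop B m k (nth u) b = c"
    and Hu: "HH m (c,t) = FF k b m (u,t)" for t using L u_def by auto
  have pr: "(u,t) \<in> scar (prism k) m" using u t by simp
  have bB: "b \<in> scar B k" using L(6) by (simp add: nondeg_def)
  show "HH m (c,t) \<in> scar X m" using Hu smorphD1[OF sm pr] by simp
  show "p m (HH m (c,t)) = phi m c t" using Hu pq pr uc by (simp add: Phib_def)
  show "set t \<subseteq> {1} \<Longrightarrow> HH m (c,t) = fst c"
  proof -
    assume "set t \<subseteq> {1}"
    then have "(u,t) \<in> Sj k 0 m" using pr by (simp add: Sj_def)
    then show ?thesis using Dq Hu us uc by (simp add: Dat_def)
  qed
  show "snd c = base m \<Longrightarrow> HH m (c,t) = fst c"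
  proof -
    assume A: "snd c = base m"
    have "c = sop B m k g b" using ez_spec[OF is_sset_B c e] by simp
    then have "snd b = base k" using A_from_surj[OF L(5) bB] A by simp
    then show ?thesis using Aq pr Hu uc by simp
  qed
  assume f: "simp_op m' m f"
  define u' where "u' = map (\<lambda>i. u!f i) [0..<Suc m']"
  define t' where "t' = sop (simplex 1) m' m f t"
  have u': "u' \<in> scar (simplex k) m'" using simplex_sop_closed[OF f u] u_def u'_def by simp
  have t': "t' \<in> scar (simplex 1) m'" using simplex_sop_closed[OF f t] t'_def by simp
  have spr: "sop (prism k) m' m f (u,t) = (u',t')" by (simp add: u'_def t'_def)
  have c': "sop B m' k (nth u') b = sop B m' m f c"
    using sop_nth_comp[OF is_sset_B u f bB] uc u'_def by simp
  have "sop X m' m f (HH m (c,t)) = FF k b m' (u',t')"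
    using Hu smorphD2[OF sm f pr] spr by simp
  moreover have "HH m' (sop B m' m f c, t') = FF k b m' (u',t')"
  proof (cases "{..k} \<subseteq> set u'")
    case True
    have su: "surj_op m' k (nth u')"
      unfolding surj_op_def
    proof
      show "simp_op m' k (nth u')" using sorted_nth_simp_op[OF u'] .
      show "\<forall>j\<le>k. \<exists>i\<le>m'. u'!i = j"
      proof (intro allI impI)
        fix j assume "j \<le> k"
        then have "j \<in> set u'" using True by auto
        then show "\<exists>i\<le>m'. u'!i = j" using u' by (auto simp: in_set_conv_nth less_Suc_eq_le)
      qed
    qed
    obtain k2 g2 b2 where e2: "ez B m' (sop B m' k (nth u') b) = (k2,g2,b2)" by (metis prod_cases3)
    note E = ez_eq[OF is_sset_B su L(6) e2]
    have "map g2 [0..<Suc m'] = u'"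
      using E(3) u' by (intro nth_equalityI) (auto simp: less_Suc_eq_le)
    then show ?thesis using e2 E c' by (simp add: HH_def Hof_def)
  next
    case False
    then have "(u',t') \<in> Sj k 0 m'" using u' t' by (simp add: Sj_def)
    then show ?thesis using Dq False c' by (simp add: Dat_def)
  qed
  ultimately show "HH m' (sop B m' m f c, sop (simplex 1) m' m f t) = sop X m' m f (HH m (c,t))"
    using t'_def by simp
qed


lemma exists_good:
  assumes ag: "allgood n" and nb: "nondeg B n b"
  shows "\<exists>Q. good n b Q HH"
proof -
  have bB: "b \<in> scar B n" using nb by (simp add: nondeg_def)
  let ?c = "\<lambda>m u. sop B m n (nth u) b"
  have cB: "u \<in> scar (simplex n) m \<Longrightarrow> ?c m u \<in> scar B m" for u m
    using sset_closed[OF is_sset_B sorted_nth_simp_op bB] by blast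
  have low: "u \<in> scar (simplex n) m \<Longrightarrow> \<not> {..n} \<subseteq> set u \<Longrightarrow> fst (ez B m (?c m u)) < n" for u m
    using nonsurj_edim[OF bB] by blast
  have cnat: "u \<in> scar (simplex n) m \<Longrightarrow> simp_op m' m f \<Longrightarrow>
      ?c m' (map (\<lambda>i. u!f i) [0..<Suc m']) = sop B m' m f (?c m u)" for u m m' f
    using sop_nth_comp[OF is_sset_B _ _ bB] by blast
  have setsub: "u \<in> scar (simplex n) m \<Longrightarrow> simp_op m' m f \<Longrightarrow> {..n} \<subseteq> set (map (\<lambda>i. u!f i) [0..<Suc m']) \<Longrightarrow> {..n} \<subseteq> set u" for u m m' f
    using set_sop_sub[of m' m f u] by auto
  show ?thesis
  proof (cases "snd b = base n")
    case True
    define Q :: "nat \<Rightarrow> nat list \<times> nat list \<Rightarrow> 'a" where "Q = (\<lambda>m s. fst (?c m (fst s)))"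
    have Ac: "u \<in> scar (simplex n) m \<Longrightarrow> snd (?c m u) = base m" for u m
      using A_closed[OF sorted_nth_simp_op True] by blast
    have "smorph (prism n) X Q"
      unfolding smorph_def
    proof (intro conjI allI impI)
      fix m s assume "s \<in> scar (prism n) m"
      then show "Q m s \<in> scar X m" unfolding Q_def using B_fst cB by (cases s) auto
    next
      fix m' m f s assume f: "simp_op m' m f" and s: "s \<in> scar (prism n) m"
      obtain u t where st: "s = (u,t)" by force
      have u: "u \<in> scar (simplex n) m" using s st by simp
      show "Q m' (sop (prism n) m' m f s) = sop X m' m f (Q m s)"
        unfolding Q_def st using cnat[OF u f] by (simp add: B_sop_fst)
    qed
    moreover have "\<forall>m s. s \<in> Sj n 0 m \<longrightarrow> Q m s = Dat HH n b m s"
    proof (intro allI impI)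
      fix m s assume s: "s \<in> Sj n 0 m"
      obtain u t where st: "s = (u,t)" by force
      have u: "u \<in> scar (simplex n) m" and t: "t \<in> scar (simplex 1) m" using Sj_sub[OF s] st by auto
      show "Q m s = Dat HH n b m s"
      proof (cases "{..n} \<subseteq> set u")
        case True then show ?thesis unfolding Q_def Dat_def st by simp
      next
        case False
        then show ?thesis unfolding Q_def Dat_def st
          using H_props(4)[OF ag cB[OF u] low[OF u False] t Ac[OF u]] by simp
      qed
    qed
    moreover have "\<forall>m s. s \<in> scar (prism n) m \<longrightarrow> p m (Q m s) = Phib n b m s"
    proof (intro allI impI)
      fix m s assume s: "s \<in> scar (prism n) m"
      obtain u t where st: "s = (u,t)" by force
      have u: "u \<in> scar (simplex n) m" and t: "t \<in> scar (simplex 1) m" using s st by auto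
      show "p m (Q m s) = Phib n b m s"
        unfolding Q_def Phib_def phi_def st using B_pj[OF cB[OF u]] hP_A[OF cB[OF u] Ac[OF u] t] Ac[OF u] by simp
    qed
    moreover have "snd b = base n \<longrightarrow> (\<forall>m s. s \<in> scar (prism n) m \<longrightarrow> Q m s = fst (sop B m n (nth (fst s)) b))"
      unfolding Q_def by simp
    ultimately show ?thesis unfolding good_def by blast
  next
    case False
    define D where "D = Dat HH n b"
    have D: "psmap (prism n) (Sj n 0) X D"
      unfolding psmap_def
    proof (intro conjI allI impI)
      show "Sj n 0 m \<subseteq> scar (prism n) m" for m using Sj_sub by blast
      show "sop (prism n) m' m f s \<in> Sj n 0 m'" if "simp_op m' m f" "s \<in> Sj n 0 m" for m' m f s
        using Sj_closed that by blast
    next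
      fix m s assume s: "s \<in> Sj n 0 m"
      obtain u t where st: "s = (u,t)" by force
      have u: "u \<in> scar (simplex n) m" and t: "t \<in> scar (simplex 1) m" using Sj_sub[OF s] st by auto
      show "D m s \<in> scar X m"
      proof (cases "{..n} \<subseteq> set u")
        case True then show ?thesis unfolding D_def Dat_def st using B_fst[OF cB[OF u]] by simp
      next
        case False
        then show ?thesis unfolding D_def Dat_def st using H_props(1)[OF ag cB[OF u] low[OF u False] t] by simp
      qed
    next
      fix m' m f s assume f: "simp_op m' m f" and s: "s \<in> Sj n 0 m"
      obtain u t where st: "s = (u,t)" by force
      have u: "u \<in> scar (simplex n) m" and t: "t \<in> scar (simplex 1) m" using Sj_sub[OF s] st by auto
      obtain u' where u'_def: "u' = map (\<lambda>i. u!f i) [0..<Suc m']" by blast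
      obtain t' where t'_def: "t' = map (\<lambda>i. t!f i) [0..<Suc m']" by blast
      have u': "u' \<in> scar (simplex n) m'" using simplex_sop_closed[OF f u] u'_def by simp
      have t'': "t' \<in> scar (simplex 1) m'" using simplex_sop_closed[OF f t] t'_def by simp
      have spr: "sop (prism n) m' m f s = (u',t')" using st u'_def t'_def by simp
      have c': "?c m' u' = sop B m' m f (?c m u)" using cnat[OF u f] u'_def by simp
      have e1: "D m' (sop (prism n) m' m f s) = Dat HH n b m' (u',t')" using spr D_def by simp
      have e2: "D m s = Dat HH n b m (u,t)" using st D_def by simp
      have "Dat HH n b m' (u',t') = sop X m' m f (Dat HH n b m (u,t))"
      proof (cases "{..n} \<subseteq> set u'")
        case True
        then have "{..n} \<subseteq> set u" using setsub[OF u f] u'_def by simp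
        then show ?thesis unfolding Dat_def using True c' by (simp add: B_sop_fst)
      next
        case False
        show ?thesis
        proof (cases "{..n} \<subseteq> set u")
          case True
          then have "set t \<subseteq> {1}" using s st by (simp add: Sj_def)
          then have "set t' \<subseteq> {1}" using set_sop_sub[OF f, of t] t t'_def by auto
          then have "HH m' (?c m' u', t') = fst (?c m' u')"
            using H_props(3)[OF ag cB[OF u'] low[OF u' False] t''] by simp
          then show ?thesis unfolding Dat_def using True False c' by (simp add: B_sop_fst)
        next
          case False2: False
          have "HH m' (sop B m' m f (?c m u), sop (simplex 1) m' m f t) = sop X m' m f (HH m (?c m u, t))"
            using H_props(5)[OF ag cB[OF u] low[OF u False2] t f] .
          moreover have "sop (simplex 1) m' m f t = t'" using t'_def by simp
          ultimately show ?thesis unfolding Dat_def using False False2 c' by simp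
        qed
      qed
      then show "D m' (sop (prism n) m' m f s) = sop X m' m f (D m s)" using e1 e2 by simp
    qed
    have Phi: "smorph (prism n) Y (Phib n b)"
      unfolding smorph_def
    proof (intro conjI allI impI)
      fix m s assume s: "s \<in> scar (prism n) m"
      obtain u t where st: "s = (u,t)" by force
      have u: "u \<in> scar (simplex n) m" and t: "t \<in> scar (simplex 1) m" using s st by auto
      show "Phib n b m s \<in> scar Y m" unfolding Phib_def st using phi_in[OF cB[OF u] t] by simp
    next
      fix m' m f s assume f: "simp_op m' m f" and s: "s \<in> scar (prism n) m"
      obtain u t where st: "s = (u,t)" by force
      have u: "u \<in> scar (simplex n) m" and t: "t \<in> scar (simplex 1) m" using s st by auto
      show "Phib n b m' (sop (prism n) m' m f s) = sop Y m' m f (Phib n b m s)"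
        unfolding Phib_def st using cnat[OF u f] phi_nat[OF f cB[OF u] t] by simp
    qed
    have pD: "\<forall>m s. s \<in> Sj n 0 m \<longrightarrow> p m (D m s) = Phib n b m s"
    proof (intro allI impI)
      fix m s assume s: "s \<in> Sj n 0 m"
      obtain u t where st: "s = (u,t)" by force
      have u: "u \<in> scar (simplex n) m" and t: "t \<in> scar (simplex 1) m" using Sj_sub[OF s] st by auto
      show "p m (D m s) = Phib n b m s"
      proof (cases "{..n} \<subseteq> set u")
        case True
        then have "set t \<subseteq> {1}" using s st by (simp add: Sj_def)
        then show ?thesis unfolding D_def Dat_def Phib_def phi_def st
          using True B_pj[OF cB[OF u]] hP_ones[OF cB[OF u] t] by simp
      next
        case False
        then show ?thesis unfolding D_def Dat_def Phib_def st
          using H_props(2)[OF ag cB[OF u] low[OF u False] t] by simp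
      qed
    qed
    obtain Q where Q: "smorph (prism n) X Q" "\<forall>m s. s \<in> Sj n 0 m \<longrightarrow> Q m s = D m s"
        "\<forall>m s. s \<in> scar (prism n) m \<longrightarrow> p m (Q m s) = Phib n b m s"
      using prism_fill[OF rf D Phi pD] by blast
    then have "good n b Q HH" unfolding good_def D_def using False by blast
    then show ?thesis by blast
  qed
qed

lemma allgood_all: "allgood n"
proof (induction n)
  case 0 then show ?case by (simp add: allgood_def)
next
  case (Suc n)
  show ?case unfolding allgood_def
  proof (intro allI impI)
    fix k b assume k: "k < Suc n" and nb: "nondeg B k b"
    show "good k b (FF k b) HH"
    proof (cases "k < n")
      case True then show ?thesis using Suc.IH nb unfolding allgood_def by blast
    next
      case False
      then have kn: "k = n" using k by simp
      have bB: "b \<in> scar B n" using nb kn by (simp add: nondeg_def)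
      show ?thesis using FF_good[OF bB exists_good[OF Suc.IH]] nb kn by simp
    qed
  qed
qed

lemma edim_lt:
  assumes c: "c \<in> scar B m"
  shows "fst (ez B m c) < Suc m"
proof -
  obtain k g b where e: "ez B m c = (k,g,b)" by (metis prod_cases3)
  have "c = sop B m m id c" using sset_id[OF is_sset_B c] by simp
  then have "k \<le> m" using ez_dim_le[OF is_sset_B simp_op_id c] e by metis
  then show ?thesis using e by simp
qed

lemma HP:
  assumes c: "c \<in> scar B m" and t: "t \<in> scar (simplex 1) m"
  shows "HH m (c,t) \<in> scar X m" "p m (HH m (c,t)) = phi m c t"
    "set t \<subseteq> {1} \<Longrightarrow> HH m (c,t) = fst c" "snd c = base m \<Longrightarrow> HH m (c,t) = fst c"
    "simp_op m' m f \<Longrightarrow> HH m' (sop B m' m f c, sop (simplex 1) m' m f t) = sop X m' m f (HH m (c,t))"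
  using H_props[OF allgood_all c edim_lt[OF c] t] by blast+


lemma simplex0_eq: "d \<in> scar (simplex 0) n \<Longrightarrow> d = replicate (Suc n) 0"
  by (auto intro!: nth_equalityI simp: subset_iff nth_replicate less_Suc_eq_le simp del: replicate_Suc)

lemma zeros_in: "replicate (Suc n) (0::nat) \<in> scar (simplex k) n"
  by (simp del: replicate_Suc)

lemma ones_in: "replicate (Suc n) (1::nat) \<in> scar (simplex 1) n"
  by (simp del: replicate_Suc)

lemma sop_rep: "simp_op m n f \<Longrightarrow> sop (simplex k) m n f (replicate (Suc n) c) = replicate (Suc m) c"
  by (auto intro!: nth_equalityI simp: nth_replicate less_Suc_eq_le simp_opD2 simp del: replicate_Suc)

lemma fib_scar: "(x,d) \<in> scar (sfibre X Y p y) n \<longleftrightarrow> x \<in> scar X n \<and> d \<in> scar (simplex 0) n \<and> p n x = sop Y n 0 (\<lambda>_. 0) y"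
  by (simp add: sfibre_def spullback_def vertex_map_def)
lemma fib_sop: "sop (sfibre X Y p y) m n f (x,d) = (sop X m n f x, sop (simplex 0) m n f d)"
  by (simp add: sfibre_def spullback_def del: simplex_sop)

lemma i_eq: "fibre_to_hofib Y y n ((x::'a),d) = (x, base n)"
  by (simp add: fibre_to_hofib_def base_map_def base_def)

lemma jbar_base: "jbar Y n (base n) = sop Y n 0 (\<lambda>_. 0) y"
  unfolding jbar_def by (rule base_comp) (simp add: simp_op_def)

lemma main: "deformation_retract_incl (sfibre X Y p y) B (fibre_to_hofib Y y)"
proof -
  let ?A = "sfibre X Y p y" and ?i = "fibre_to_hofib Y y"
  let ?z = "\<lambda>n. replicate (Suc n) (0::nat)"
  define r where "r = (\<lambda>n c. (HH n (c, ?z n), ?z n))"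
  define h where "h = (\<lambda>n ct. (HH n ct, hP n (fst ct) (snd ct)))"
  have iB: "?i n a \<in> scar B n" if "a \<in> scar ?A n" for n a
  proof -
    obtain x d where a: "a = (x,d)" by force
    have "x \<in> scar X n" "p n x = sop Y n 0 (\<lambda>_. 0) y" using that a by (auto simp: fib_scar)
    then show ?thesis unfolding a i_eq B_scar using base_P jbar_base by simp
  qed
  have ism: "smorph ?A B ?i"
    unfolding smorph_def
  proof (intro conjI allI impI)
    fix m n f a assume f: "simp_op m n f" and a: "a \<in> scar ?A n"
    obtain x d where ad: "a = (x,d)" by force
    show "?i m (sop ?A m n f a) = sop B m n f (?i n a)"
      unfolding ad fib_sop i_eq B_sop base_sop[OF f] by simp
  qed (rule iB)
  have inj: "inj_on (?i n) (scar ?A n)" for n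
  proof (rule inj_onI)
    fix a a' assume a: "a \<in> scar ?A n" and a': "a' \<in> scar ?A n" and e: "?i n a = ?i n a'"
    obtain x d where ad: "a = (x,d)" by force
    obtain x' d' where ad': "a' = (x',d')" by force
    have "d = ?z n" "d' = ?z n" using a a' ad ad' simplex0_eq by (auto simp: fib_scar)
    then show "a = a'" using e ad ad' i_eq by simp
  qed
  have rsm: "smorph B ?A r"
    unfolding smorph_def
  proof (intro conjI allI impI)
    fix n c assume c: "c \<in> scar B n"
    have "p n (HH n (c, ?z n)) = sop Y n 0 (\<lambda>_. 0) y"
      using HP(2)[OF c zeros_in] hP_zeros[OF c] jbar_base by (simp add: phi_def)
    then show "r n c \<in> scar ?A n" unfolding r_def using HP(1)[OF c zeros_in] zeros_in[of n 0] by (simp only: fib_scar)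
  next
    fix m n f c assume f: "simp_op m n f" and c: "c \<in> scar B n"
    show "r m (sop B m n f c) = sop ?A m n f (r n c)"
      unfolding r_def fib_sop using HP(5)[OF c zeros_in f] sop_rep[OF f] by simp
  qed
  have ri: "r n (?i n a) = a" if a: "a \<in> scar ?A n" for n a
  proof -
    obtain x d where ad: "a = (x,d)" by force
    have d: "d = ?z n" using a ad simplex0_eq by (auto simp: fib_scar)
    have "HH n ((x, base n), ?z n) = x" using HP(4)[OF iB[OF a, unfolded ad i_eq] zeros_in] by simp
    then show ?thesis unfolding r_def using ad d i_eq by simp
  qed
  have hsm: "smorph (sprod_interval B) B h"
    unfolding smorph_def
  proof (intro conjI allI impI)
    fix n ct assume ct: "ct \<in> scar (sprod_interval B) n"
    obtain c t where e: "ct = (c,t)" by (metis prod.exhaust)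
    have c: "c \<in> scar B n" and t: "t \<in> scar (simplex 1) n" using ct e by (auto simp: sprod_interval_def)
    show "h n ct \<in> scar B n" unfolding h_def e
      using HP(1)[OF c t] HP(2)[OF c t] hP_in[OF c t] by (simp add: B_scar phi_def)
  next
    fix m n f ct assume f: "simp_op m n f" and ct: "ct \<in> scar (sprod_interval B) n"
    obtain c t where e: "ct = (c,t)" by (metis prod.exhaust)
    have c: "c \<in> scar B n" and t: "t \<in> scar (simplex 1) n" using ct e by (auto simp: sprod_interval_def)
    have s: "sop (sprod_interval B) m n f ct = (sop B m n f c, sop (simplex 1) m n f t)"
      using e by (simp add: sprod_interval_def del: simplex_sop)
    show "h m (sop (sprod_interval B) m n f ct) = sop B m n f (h n ct)"
      unfolding h_def s unfolding e using HP(5)[OF c t f] hP_nat[OF f c t] by (simp add: B_sop)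
  qed
  have h0: "h n (c, ?z n) = ?i n (r n c)" if c: "c \<in> scar B n" for n c
    unfolding h_def r_def using hP_zeros[OF c] i_eq by simp
  have h1: "h n (c, replicate (Suc n) 1) = c" if c: "c \<in> scar B n" for n c
  proof -
    have "set (replicate (Suc n) (1::nat)) \<subseteq> {1}" by (simp del: replicate_Suc)
    then show ?thesis unfolding h_def using HP(3)[OF c ones_in] hP_ones[OF c ones_in] by simp
  qed
  have hA: "h n (?i n a, t) = ?i n a" if a: "a \<in> scar ?A n" and t: "t \<in> scar (simplex 1) n" for n a t
  proof -
    obtain x d where ad: "a = (x,d)" by force
    have xB: "(x, base n) \<in> scar B n" using iB[OF a] ad i_eq by simp
    show ?thesis unfolding h_def ad i_eq using HP(4)[OF xB t] hP_A[OF xB _ t] by simp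
  qed
  show ?thesis
    unfolding deformation_retract_incl_def
    using ism inj rsm ri hsm h0 h1 hA by blast
qed

end

theorem proposition4p12:
  fixes X :: "'a sset" and Y :: "'b sset" and p :: "nat \<Rightarrow> 'a \<Rightarrow> 'b" and y :: 'b
  assumes "is_sset X" and "is_sset Y"
    and "right_fibration X Y p"
    and "y \<in> scar Y 0"
  shows "deformation_retract_incl (sfibre X Y p y) (right_hofib X Y p y) (fibre_to_hofib Y y)"
proof -
  interpret rfib X Y p y using assms by unfold_locales
  show ?thesis using main .
qed

end
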